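(* Let $A\subseteq B$ be an extension of commutative rings, and regard $B$ as a subring of $B\otimes_A B$ via $b\mapsto b\otimes 1$. Then $\mathfrak{C}(A,B)=\mathfrak{C}(A,B\otimes_AB)$; that is, the canonical map $\mathfrak{C}(A,B)\to\mathfrak{C}(A,B\otimes_AB)$ induced by the inclusion of groups of invertible ideals is an isomorphism.
   Context: For an extension of rings $R\subseteq S$ and $R$-submodules $L,L'$ of $S$, $LL'$ is the $R$-submodule of finite sums $\sum x_ky_k$. An $R$-submodule $L$ of $S$ is an invertible ideal of $R\subseteq S$ if $LL'=R$ for some $R$-submodule $L'$ of $S$; these form an abelian group $\mathscr{G}(R,S)$ and $\mathfrak{C}(R,S)=\mathscr{G}(R,S)/\{Rx: x\in S^\ast\}$. *)

theory Defs
  imports "HOL-Algebra.Algebra"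
begin

text \<open>A ring extension R \<subseteq> S is given by a ring S (HOL-Algebra record) and a subset
  R of its carrier (a subring).\<close>

definition rsubmod :: "('s,'n) ring_scheme \<Rightarrow> 's set \<Rightarrow> 's set \<Rightarrow> bool" where
  "rsubmod S R L \<longleftrightarrow> L \<subseteq> carrier S \<and> \<zero>\<^bsub>S\<^esub> \<in> L
     \<and> (\<forall>x\<in>L. \<forall>y\<in>L. x \<oplus>\<^bsub>S\<^esub> y \<in> L) \<and> (\<forall>x\<in>L. \<ominus>\<^bsub>S\<^esub> x \<in> L)
     \<and> (\<forall>r\<in>R. \<forall>x\<in>L. r \<otimes>\<^bsub>S\<^esub> x \<in> L)"

inductive_set smod_prod :: "('s,'n) ring_scheme \<Rightarrow> 's set \<Rightarrow> 's set \<Rightarrow> 's set"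
  for S L L' where
  zero: "\<zero>\<^bsub>S\<^esub> \<in> smod_prod S L L'"
| step: "x \<in> L \<Longrightarrow> y \<in> L' \<Longrightarrow> z \<in> smod_prod S L L' \<Longrightarrow> (x \<otimes>\<^bsub>S\<^esub> y) \<oplus>\<^bsub>S\<^esub> z \<in> smod_prod S L L'"

definition inv_ideal :: "('s,'n) ring_scheme \<Rightarrow> 's set \<Rightarrow> 's set \<Rightarrow> bool" where
  "inv_ideal S R L \<longleftrightarrow> rsubmod S R L \<and> (\<exists>L'. rsubmod S R L' \<and> smod_prod S L L' = R)"

definition Ginv :: "('s,'n) ring_scheme \<Rightarrow> 's set \<Rightarrow> 's set set" where
  "Ginv S R = {L. inv_ideal S R L}"

definition scale :: "('s,'n) ring_scheme \<Rightarrow> 's set \<Rightarrow> 's \<Rightarrow> 's set" where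
  "scale S L u = (\<lambda>l. l \<otimes>\<^bsub>S\<^esub> u) ` L"

text \<open>Class of L modulo the principal invertible ideals Rx, x a unit of S
  (note L(Rx) = Lx).\<close>
definition Ccls :: "('s,'n) ring_scheme \<Rightarrow> 's set \<Rightarrow> 's set \<Rightarrow> 's set set" where
  "Ccls S R L = {M \<in> Ginv S R. \<exists>u\<in>Units S. M = scale S L u}"

definition Cgrp :: "('s,'n) ring_scheme \<Rightarrow> 's set \<Rightarrow> 's set set monoid" where
  "Cgrp S R = \<lparr>carrier = Ccls S R ` Ginv S R,
      monoid.mult = (\<lambda>xx yy. {N. \<exists>L\<in>xx. \<exists>M\<in>yy. N = smod_prod S L M}),
      one = Ccls S R R\<rparr>"

definition Cmap :: "('s,'n) ring_scheme \<Rightarrow> ('t,'k) ring_scheme \<Rightarrow> ('s \<Rightarrow> 't) \<Rightarrow> 's set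
    \<Rightarrow> 's set set \<Rightarrow> 't set set" where
  "Cmap S T \<phi> R xx = {N \<in> Ginv T (\<phi> ` R). \<exists>L\<in>xx. \<exists>u\<in>Units T. N = scale T (\<phi> ` L) u}"

text \<open>Formal Z-linear combinations of pairs (x,y) in B \<times> B (finitely supported),
  modulo the subgroup generated by bilinearity and A-balancedness relations.
  Multiplication is induced by (x\<otimes>y)(x'\<otimes>y') = xx'\<otimes>yy'.\<close>

definition delta :: "'b \<Rightarrow> 'b \<Rightarrow> ('b \<times> 'b \<Rightarrow> int)" where
  "delta x y = (\<lambda>p. if p = (x, y) then 1 else 0)"

definition fsums :: "('b,'m) ring_scheme \<Rightarrow> ('b \<times> 'b \<Rightarrow> int) set" where
  "fsums B = {f. finite {p. f p \<noteq> 0} \<and> {p. f p \<noteq> 0} \<subseteq> carrier B \<times> carrier B}"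

inductive_set tens_rels :: "('b,'m) ring_scheme \<Rightarrow> 'b set \<Rightarrow> ('b \<times> 'b \<Rightarrow> int) set"
  for B A where
  zero: "(\<lambda>_. 0) \<in> tens_rels B A"
| addl: "x \<in> carrier B \<Longrightarrow> x' \<in> carrier B \<Longrightarrow> y \<in> carrier B \<Longrightarrow>
     (\<lambda>p. delta (x \<oplus>\<^bsub>B\<^esub> x') y p - delta x y p - delta x' y p) \<in> tens_rels B A"
| addr: "x \<in> carrier B \<Longrightarrow> y \<in> carrier B \<Longrightarrow> y' \<in> carrier B \<Longrightarrow>
     (\<lambda>p. delta x (y \<oplus>\<^bsub>B\<^esub> y') p - delta x y p - delta x y' p) \<in> tens_rels B A"
| bal: "a \<in> A \<Longrightarrow> x \<in> carrier B \<Longrightarrow> y \<in> carrier B \<Longrightarrow>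
     (\<lambda>p. delta (a \<otimes>\<^bsub>B\<^esub> x) y p - delta x (a \<otimes>\<^bsub>B\<^esub> y) p) \<in> tens_rels B A"
| diff: "f \<in> tens_rels B A \<Longrightarrow> g \<in> tens_rels B A \<Longrightarrow> (\<lambda>p. f p - g p) \<in> tens_rels B A"

definition tens_class :: "('b,'m) ring_scheme \<Rightarrow> 'b set \<Rightarrow> ('b \<times> 'b \<Rightarrow> int)
    \<Rightarrow> ('b \<times> 'b \<Rightarrow> int) set" where
  "tens_class B A f = {g \<in> fsums B. (\<lambda>p. f p - g p) \<in> tens_rels B A}"

definition conv :: "('b,'m) ring_scheme \<Rightarrow> ('b \<times> 'b \<Rightarrow> int) \<Rightarrow> ('b \<times> 'b \<Rightarrow> int)
    \<Rightarrow> ('b \<times> 'b \<Rightarrow> int)" where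
  "conv B f g = (\<lambda>p. \<Sum>(q, r) \<in> {q. f q \<noteq> 0} \<times> {r. g r \<noteq> 0}.
      if (fst q \<otimes>\<^bsub>B\<^esub> fst r, snd q \<otimes>\<^bsub>B\<^esub> snd r) = p then f q * g r else 0)"

definition tensor :: "('b,'m) ring_scheme \<Rightarrow> 'b set \<Rightarrow> ('b \<times> 'b \<Rightarrow> int) set ring" where
  "tensor B A = \<lparr>carrier = tens_class B A ` fsums B,
      monoid.mult = (\<lambda>xx yy. {h \<in> fsums B. \<exists>f\<in>xx. \<exists>g\<in>yy. (\<lambda>p. h p - conv B f g p) \<in> tens_rels B A}),
      one = tens_class B A (delta \<one>\<^bsub>B\<^esub> \<one>\<^bsub>B\<^esub>),
      ring.zero = tens_class B A (\<lambda>_. 0),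
      ring.add = (\<lambda>xx yy. {h. \<exists>f\<in>xx. \<exists>g\<in>yy. h = (\<lambda>p. f p + g p)})\<rparr>"

definition tens_incl :: "('b,'m) ring_scheme \<Rightarrow> 'b set \<Rightarrow> 'b \<Rightarrow> ('b \<times> 'b \<Rightarrow> int) set" where
  "tens_incl B A b = tens_class B A (delta b \<one>\<^bsub>B\<^esub>)"

end

theory Submission
  imports Defs
begin

context cring
begin

lemma sp_induct_sub:
  assumes "\<zero> \<in> P" "\<And>a b. a \<in> P \<Longrightarrow> b \<in> P \<Longrightarrow> a \<oplus> b \<in> P"
    "\<And>x y. x \<in> L \<Longrightarrow> y \<in> M \<Longrightarrow> x \<otimes> y \<in> P"
  shows "smod_prod R L M \<subseteq> P"
proof
  fix z assume "z \<in> smod_prod R L M" then show "z \<in> P"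
    by (induction rule: smod_prod.induct) (use assms in auto)
qed

lemma sp_carrier:
  assumes "L \<subseteq> carrier R" "M \<subseteq> carrier R"
  shows "smod_prod R L M \<subseteq> carrier R"
  by (rule sp_induct_sub) (use assms in auto)

lemma sp_add:
  assumes "L \<subseteq> carrier R" "M \<subseteq> carrier R"
    and "x \<in> smod_prod R L M" "y \<in> smod_prod R L M"
  shows "x \<oplus> y \<in> smod_prod R L M"
  using assms(3)
proof (induction rule: smod_prod.induct)
  case zero
  have "y \<in> carrier R" using sp_carrier[OF assms(1,2)] assms(4) by auto
  then show ?case using assms(4) by simp
next
  case (step a b z)
  have "(a \<otimes> b \<oplus> z) \<oplus> y = a \<otimes> b \<oplus> (z \<oplus> y)"
    using step assms sp_carrier by (meson a_assoc m_closed subsetD)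
  then show ?case using step by (simp add: smod_prod.step)
qed

lemma sp_prod:
  assumes "L \<subseteq> carrier R" "M \<subseteq> carrier R" "x \<in> L" "y \<in> M"
  shows "x \<otimes> y \<in> smod_prod R L M"
proof -
  have "x \<otimes> y \<oplus> \<zero> \<in> smod_prod R L M" by (rule smod_prod.step) (use assms smod_prod.zero in auto)
  moreover have "x \<otimes> y \<in> carrier R" using assms by (meson m_closed subsetD)
  ultimately show ?thesis by simp
qed

lemma sp_mono:
  assumes "L \<subseteq> L'" "M \<subseteq> M'"
  shows "smod_prod R L M \<subseteq> smod_prod R L' M'"
proof
  fix z assume "z \<in> smod_prod R L M" then show "z \<in> smod_prod R L' M'"
    by (induction rule: smod_prod.induct) (use assms in \<open>auto intro: smod_prod.intros\<close>)
qed

lemma sp_comm_sub: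
  assumes "L \<subseteq> carrier R" "M \<subseteq> carrier R"
  shows "smod_prod R L M \<subseteq> smod_prod R M L"
proof (rule sp_induct_sub)
  show "x \<otimes> y \<in> smod_prod R M L" if "x \<in> L" "y \<in> M" for x y
  proof -
    have "x \<otimes> y = y \<otimes> x" using that assms by (meson m_comm subsetD)
    then show ?thesis using sp_prod[OF assms(2,1)] that by simp
  qed
qed (use assms in \<open>auto intro: smod_prod.zero sp_add\<close>)

lemma sp_comm:
  assumes "L \<subseteq> carrier R" "M \<subseteq> carrier R"
  shows "smod_prod R L M = smod_prod R M L"
  using sp_comm_sub assms by blast

lemma sp_assoc_sub:
  assumes "L \<subseteq> carrier R" "M \<subseteq> carrier R" "N \<subseteq> carrier R"
  shows "smod_prod R (smod_prod R L M) N \<subseteq> smod_prod R L (smod_prod R M N)"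
proof (rule sp_induct_sub)
  have c1: "smod_prod R M N \<subseteq> carrier R" using assms sp_carrier by auto
  show "\<zero> \<in> smod_prod R L (smod_prod R M N)" by (rule smod_prod.zero)
  show "a \<oplus> b \<in> smod_prod R L (smod_prod R M N)"
    if "a \<in> smod_prod R L (smod_prod R M N)" "b \<in> smod_prod R L (smod_prod R M N)" for a b
    using sp_add[OF assms(1) c1] that by auto
  show "x \<otimes> n \<in> smod_prod R L (smod_prod R M N)" if "x \<in> smod_prod R L M" "n \<in> N" for x n
    using that(1)
  proof (induction rule: smod_prod.induct)
    case zero
    have "n \<in> carrier R" using that assms by auto
    then show ?case by (auto intro: smod_prod.zero)
  next
    case (step a b z)
    have cz: "z \<in> carrier R" using step sp_carrier assms by auto
    have "(a \<otimes> b \<oplus> z) \<otimes> n = a \<otimes> (b \<otimes> n) \<oplus> z \<otimes> n"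
      using step assms that cz by (auto simp: l_distr m_assoc subset_iff)
    moreover have "b \<otimes> n \<in> smod_prod R M N" using sp_prod assms step that by auto
    ultimately show ?case using step by (auto intro: smod_prod.step)
  qed
qed

lemma sp_assoc:
  assumes "L \<subseteq> carrier R" "M \<subseteq> carrier R" "N \<subseteq> carrier R"
  shows "smod_prod R (smod_prod R L M) N = smod_prod R L (smod_prod R M N)"
proof
  show "smod_prod R (smod_prod R L M) N \<subseteq> smod_prod R L (smod_prod R M N)"
    using sp_assoc_sub assms by auto
  have cMN: "smod_prod R M N \<subseteq> carrier R" "smod_prod R N M \<subseteq> carrier R"
    "smod_prod R L M \<subseteq> carrier R" "smod_prod R M L \<subseteq> carrier R"
    using assms sp_carrier by auto
  have "smod_prod R L (smod_prod R M N) = smod_prod R (smod_prod R N M) L"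
    using sp_comm assms cMN by metis
  also have "\<dots> \<subseteq> smod_prod R N (smod_prod R M L)"
    using sp_assoc_sub assms by auto
  also have "\<dots> = smod_prod R (smod_prod R L M) N"
    using sp_comm assms cMN by metis
  finally show "smod_prod R L (smod_prod R M N) \<subseteq> smod_prod R (smod_prod R L M) N" .
qed

lemma sp_neg:
  assumes "L \<subseteq> carrier R" "M \<subseteq> carrier R" "\<forall>x\<in>L. \<ominus> x \<in> L"
    and "z \<in> smod_prod R L M"
  shows "\<ominus> z \<in> smod_prod R L M"
  using assms(4)
proof (induction rule: smod_prod.induct)
  case zero
  then show ?case by (auto intro: smod_prod.zero)
next
  case (step a b z)
  have cz: "z \<in> carrier R" using step sp_carrier assms by auto
  have "\<ominus> (a \<otimes> b \<oplus> z) = (\<ominus> a) \<otimes> b \<oplus> \<ominus> z"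
    using step assms cz by (auto simp: minus_add l_minus subset_iff)
  then show ?case using step assms by (auto intro: smod_prod.step)
qed

lemma sp_rsubmod:
  assumes "rsubmod R K L" "rsubmod R K M" "K \<subseteq> carrier R"
  shows "rsubmod R K (smod_prod R L M)"
proof -
  have c: "L \<subseteq> carrier R" "M \<subseteq> carrier R" using assms unfolding rsubmod_def by auto
  have "r \<otimes> z \<in> smod_prod R L M" if "r \<in> K" "z \<in> smod_prod R L M" for r z
    using that(2)
  proof (induction rule: smod_prod.induct)
    case zero
    have "r \<in> carrier R" using that assms by auto
    then show ?case by (auto intro: smod_prod.zero)
  next
    case (step a b z)
    have cz: "z \<in> carrier R" using step sp_carrier c by auto
    have cr: "r \<in> carrier R" using that assms by auto
    have "r \<otimes> (a \<otimes> b \<oplus> z) = (r \<otimes> a) \<otimes> b \<oplus> r \<otimes> z"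
      using step c cz cr by (auto simp: r_distr m_assoc subset_iff)
    moreover have "r \<otimes> a \<in> L" using assms(1) that step unfolding rsubmod_def by auto
    ultimately show ?case using step by (auto intro: smod_prod.step)
  qed
  then show ?thesis
    unfolding rsubmod_def using sp_carrier[OF c] sp_add[OF c] sp_neg[OF c] assms(1)
    by (auto intro: smod_prod.zero simp: rsubmod_def)
qed

lemma sp_unit:
  assumes "rsubmod R K L" "K \<subseteq> carrier R" "\<one> \<in> K"
  shows "smod_prod R K L = L"
proof
  have c: "L \<subseteq> carrier R" using assms unfolding rsubmod_def by auto
  show "smod_prod R K L \<subseteq> L"
    by (rule sp_induct_sub) (use assms in \<open>auto simp: rsubmod_def\<close>)
  show "L \<subseteq> smod_prod R K L"
  proof
    fix x assume "x \<in> L"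
    then have "\<one> \<otimes> x \<in> smod_prod R K L" using sp_prod[OF assms(2) c] assms by auto
    then show "x \<in> smod_prod R K L" using c \<open>x \<in> L\<close> by auto
  qed
qed

lemma scale_carrier:
  assumes "L \<subseteq> carrier R" "u \<in> carrier R"
  shows "scale R L u \<subseteq> carrier R"
  using assms unfolding scale_def by auto

lemma scale_scale:
  assumes "L \<subseteq> carrier R" "u \<in> carrier R" "v \<in> carrier R"
  shows "scale R (scale R L u) v = scale R L (u \<otimes> v)"
  using assms unfolding scale_def image_image by (intro image_cong refl) (auto simp: m_assoc)

lemma scale_one:
  assumes "L \<subseteq> carrier R"
  shows "scale R L \<one> = L"
  using assms unfolding scale_def by (auto simp: subset_iff image_iff)

lemma sp_scale:
  assumes "L \<subseteq> carrier R" "M \<subseteq> carrier R" "u \<in> carrier R" "v \<in> carrier R"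
  shows "smod_prod R (scale R L u) (scale R M v) = scale R (smod_prod R L M) (u \<otimes> v)"
proof
  have cs: "scale R L u \<subseteq> carrier R" "scale R M v \<subseteq> carrier R"
    using scale_carrier assms by auto
  have cLM: "smod_prod R L M \<subseteq> carrier R" using sp_carrier assms by auto
  show "smod_prod R (scale R L u) (scale R M v) \<subseteq> scale R (smod_prod R L M) (u \<otimes> v)"
  proof (rule sp_induct_sub)
    show "\<zero> \<in> scale R (smod_prod R L M) (u \<otimes> v)"
      unfolding scale_def using assms
      by (auto intro!: image_eqI[where x=\<zero>] smod_prod.zero)
    show "a \<oplus> b \<in> scale R (smod_prod R L M) (u \<otimes> v)"
      if hab: "a \<in> scale R (smod_prod R L M) (u \<otimes> v)" "b \<in> scale R (smod_prod R L M) (u \<otimes> v)" for a b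
    proof -
      obtain a' b' where ab: "a' \<in> smod_prod R L M" "b' \<in> smod_prod R L M"
        "a = a' \<otimes> (u \<otimes> v)" "b = b' \<otimes> (u \<otimes> v)" using hab unfolding scale_def by blast
      have "a' \<in> carrier R" "b' \<in> carrier R" using ab cLM by auto
      then have "a \<oplus> b = (a' \<oplus> b') \<otimes> (u \<otimes> v)" using ab assms by (simp add: l_distr)
      then show ?thesis using sp_add[OF assms(1,2)] ab unfolding scale_def by auto
    qed
    show "x \<otimes> y \<in> scale R (smod_prod R L M) (u \<otimes> v)" if hxy: "x \<in> scale R L u" "y \<in> scale R M v" for x y
    proof -
      obtain a b where ab: "a \<in> L" "b \<in> M" "x = a \<otimes> u" "y = b \<otimes> v"
        using hxy unfolding scale_def by auto
      have "x \<otimes> y = (a \<otimes> b) \<otimes> (u \<otimes> v)" using ab assms by (auto simp: m_ac subset_iff)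
      then show ?thesis using sp_prod[OF assms(1,2)] ab unfolding scale_def by auto
    qed
  qed
  show "scale R (smod_prod R L M) (u \<otimes> v) \<subseteq> smod_prod R (scale R L u) (scale R M v)"
  proof
    fix w assume "w \<in> scale R (smod_prod R L M) (u \<otimes> v)"
    then obtain z where z: "z \<in> smod_prod R L M" "w = z \<otimes> (u \<otimes> v)" unfolding scale_def by auto
    have "z \<otimes> (u \<otimes> v) \<in> smod_prod R (scale R L u) (scale R M v)"
      using z(1)
    proof (induction rule: smod_prod.induct)
      case zero
      then show ?case using assms by (auto intro: smod_prod.zero)
    next
      case (step a b z)
      have cz: "z \<in> carrier R" using step sp_carrier assms by auto
      have "a \<in> carrier R" "b \<in> carrier R" using step assms by auto
      then have "(a \<otimes> b \<oplus> z) \<otimes> (u \<otimes> v) = (a \<otimes> u) \<otimes> (b \<otimes> v) \<oplus> z \<otimes> (u \<otimes> v)"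
        using assms cz by algebra
      moreover have "a \<otimes> u \<in> scale R L u" "b \<otimes> v \<in> scale R M v"
        using step unfolding scale_def by auto
      ultimately show ?case using step by (auto intro: smod_prod.step)
    qed
    then show "w \<in> smod_prod R (scale R L u) (scale R M v)" using z by simp
  qed
qed

lemma scale_rsubmod:
  assumes "rsubmod R K L" "u \<in> carrier R" "K \<subseteq> carrier R"
  shows "rsubmod R K (scale R L u)"
proof -
  have c: "L \<subseteq> carrier R" using assms unfolding rsubmod_def by auto
  have 1: "\<zero> \<in> scale R L u" unfolding scale_def using assms
    by (auto simp: rsubmod_def intro!: image_eqI[where x=\<zero>])
  have 2: "x \<oplus> y \<in> scale R L u" if hxy: "x \<in> scale R L u" "y \<in> scale R L u" for x y
  proof -
    obtain a b where "a \<in> L" "b \<in> L" "x = a \<otimes> u" "y = b \<otimes> u" using hxy unfolding scale_def by blast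
    then show ?thesis using assms c unfolding scale_def rsubmod_def
      by (auto simp: l_distr[symmetric] subset_iff intro!: image_eqI)
  qed
  have 3: "\<ominus> x \<in> scale R L u" if hx: "x \<in> scale R L u" for x
  proof -
    obtain a where a: "a \<in> L" "x = a \<otimes> u" using hx unfolding scale_def by auto
    then have "\<ominus> x = (\<ominus> a) \<otimes> u" using assms c by (auto simp: l_minus subset_iff)
    moreover have "\<ominus> a \<in> L" using a assms unfolding rsubmod_def by auto
    ultimately show ?thesis unfolding scale_def by auto
  qed
  have 4: "r \<otimes> x \<in> scale R L u" if hr: "r \<in> K" "x \<in> scale R L u" for r x
  proof -
    obtain a where "a \<in> L" "x = a \<otimes> u" using hr unfolding scale_def by auto
    then show ?thesis using assms c hr unfolding scale_def rsubmod_def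
      by (auto simp: m_assoc[symmetric] subset_iff intro!: image_eqI)
  qed
  show ?thesis unfolding rsubmod_def using scale_carrier[OF c assms(2)] 1 2 3 4 by auto
qed

end


context cring
begin

lemma Ginv_rsubmod: "L \<in> Ginv R K \<Longrightarrow> rsubmod R K L"
  unfolding Ginv_def inv_ideal_def by auto

lemma Ginv_carrier: "L \<in> Ginv R K \<Longrightarrow> L \<subseteq> carrier R"
  unfolding Ginv_def inv_ideal_def rsubmod_def by auto

lemma scale_Ginv:
  assumes K: "K \<subseteq> carrier R" and L: "L \<in> Ginv R K" and u: "u \<in> Units R"
  shows "scale R L u \<in> Ginv R K"
proof -
  obtain L' where L': "rsubmod R K L'" "smod_prod R L L' = K"
    using L unfolding Ginv_def inv_ideal_def by auto
  have cL: "L \<subseteq> carrier R" "L' \<subseteq> carrier R" using Ginv_carrier[OF L] L'(1) unfolding rsubmod_def by auto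
  have cu: "u \<in> carrier R" "inv u \<in> carrier R" using u by auto
  have "smod_prod R (scale R L u) (scale R L' (inv u)) = scale R K (u \<otimes> inv u)"
    using sp_scale[OF cL cu] L' by simp
  also have "\<dots> = K" using u K scale_one by simp
  finally show ?thesis unfolding Ginv_def inv_ideal_def
    using scale_rsubmod[OF Ginv_rsubmod[OF L] cu(1) K] scale_rsubmod[OF L'(1) cu(2) K] by auto
qed

lemma sp_Ginv:
  assumes K: "K \<subseteq> carrier R" "\<one> \<in> K" and L: "L \<in> Ginv R K" and M: "M \<in> Ginv R K"
  shows "smod_prod R L M \<in> Ginv R K"
proof -
  obtain L' where L': "rsubmod R K L'" "smod_prod R L L' = K"
    using L unfolding Ginv_def inv_ideal_def by auto
  obtain M' where M': "rsubmod R K M'" "smod_prod R M M' = K"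
    using M unfolding Ginv_def inv_ideal_def by auto
  have c: "L \<subseteq> carrier R" "L' \<subseteq> carrier R" "M \<subseteq> carrier R" "M' \<subseteq> carrier R"
    using Ginv_carrier[OF L] Ginv_carrier[OF M] L'(1) M'(1) unfolding rsubmod_def by auto
  have "smod_prod R (smod_prod R L M) (smod_prod R L' M') =
        smod_prod R L (smod_prod R M (smod_prod R M' L'))"
    using sp_assoc sp_comm sp_carrier c by metis
  also have "\<dots> = smod_prod R L (smod_prod R (smod_prod R M M') L')"
    using sp_assoc sp_carrier c by metis
  also have "\<dots> = smod_prod R L L'" using M' sp_unit[OF L'(1) K] by simp
  also have "\<dots> = K" by fact
  finally show ?thesis unfolding Ginv_def inv_ideal_def
    using sp_rsubmod[OF Ginv_rsubmod[OF L] Ginv_rsubmod[OF M] K(1)]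
      sp_rsubmod[OF L'(1) M'(1) K(1)] by auto
qed

lemma Ccls_eq:
  assumes K: "K \<subseteq> carrier R" and L: "L \<in> Ginv R K"
  shows "Ccls R K L = scale R L ` Units R"
  unfolding Ccls_def using scale_Ginv[OF K L] by auto

lemma Ccls_self:
  assumes K: "K \<subseteq> carrier R" and L: "L \<in> Ginv R K"
  shows "L \<in> Ccls R K L"
  unfolding Ccls_eq[OF K L] using scale_one[OF Ginv_carrier[OF L]]
  by (metis Units_one_closed image_eqI)

lemma Ccls_scale:
  assumes K: "K \<subseteq> carrier R" and L: "L \<in> Ginv R K" and u: "u \<in> Units R"
  shows "Ccls R K (scale R L u) = Ccls R K L"
proof -
  have c: "L \<subseteq> carrier R" using Ginv_carrier L by auto
  have "scale R (scale R L u) ` Units R = scale R L ` Units R"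
  proof
    show "scale R (scale R L u) ` Units R \<subseteq> scale R L ` Units R"
      using scale_scale[OF c] u by auto
    show "scale R L ` Units R \<subseteq> scale R (scale R L u) ` Units R"
    proof
      fix NN assume "NN \<in> scale R L ` Units R"
      then obtain w where w: "w \<in> Units R" "NN = scale R L w" by auto
      have "w = u \<otimes> (inv u \<otimes> w)" using u w
        by (metis Units_closed Units_inv_closed Units_r_inv l_one m_assoc)
      moreover have "scale R (scale R L u) (inv u \<otimes> w) = scale R L (u \<otimes> (inv u \<otimes> w))"
        using w u scale_scale[OF c, of u "inv u \<otimes> w"] by (simp add: Units_closed)
      ultimately have "NN = scale R (scale R L u) (inv u \<otimes> w)"
        using w by simp
      then show "NN \<in> scale R (scale R L u) ` Units R" using u w by auto
    qed
  qed
  then show ?thesis using Ccls_eq[OF K] scale_Ginv[OF K L u] L by simp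
qed

lemma Ccls_eqD:
  assumes K: "K \<subseteq> carrier R" and L: "L \<in> Ginv R K" and M: "M \<in> Ginv R K"
    and eq: "Ccls R K L = Ccls R K M"
  shows "\<exists>u\<in>Units R. M = scale R L u"
proof -
  have "M \<in> Ccls R K L" using Ccls_self[OF K M] eq by simp
  then show ?thesis using Ccls_eq[OF K L] by auto
qed

lemma Cgrp_mult:
  assumes K: "K \<subseteq> carrier R" "\<one> \<in> K" and L: "L \<in> Ginv R K" and M: "M \<in> Ginv R K"
  shows "Ccls R K L \<otimes>\<^bsub>Cgrp R K\<^esub> Ccls R K M = Ccls R K (smod_prod R L M)"
proof -
  have c: "L \<subseteq> carrier R" "M \<subseteq> carrier R" using Ginv_carrier L M by auto
  have LM: "smod_prod R L M \<in> Ginv R K" using sp_Ginv K L M by auto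
  have "{N. \<exists>L1\<in>Ccls R K L. \<exists>M1\<in>Ccls R K M. N = smod_prod R L1 M1} = scale R (smod_prod R L M) ` Units R"
  proof
    show "{N. \<exists>L1\<in>Ccls R K L. \<exists>M1\<in>Ccls R K M. N = smod_prod R L1 M1} \<subseteq> scale R (smod_prod R L M) ` Units R"
      unfolding Ccls_eq[OF K(1) L] Ccls_eq[OF K(1) M] using sp_scale[OF c] by auto
    show "scale R (smod_prod R L M) ` Units R \<subseteq> {N. \<exists>L1\<in>Ccls R K L. \<exists>M1\<in>Ccls R K M. N = smod_prod R L1 M1}"
    proof
      fix NN assume "NN \<in> scale R (smod_prod R L M) ` Units R"
      then obtain w where w: "w \<in> Units R" "NN = scale R (smod_prod R L M) w" by auto
      have "NN = smod_prod R (scale R L w) (scale R M \<one>)" using sp_scale[OF c] w by auto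
      moreover have "scale R L w \<in> Ccls R K L" "scale R M \<one> \<in> Ccls R K M"
        using Ccls_eq[OF K(1) L] Ccls_eq[OF K(1) M] w by auto
      ultimately show "NN \<in> {N. \<exists>L1\<in>Ccls R K L. \<exists>M1\<in>Ccls R K M. N = smod_prod R L1 M1}" by auto
    qed
  qed
  then show ?thesis unfolding Cgrp_def using Ccls_eq[OF K(1) LM] by simp
qed

end


context ring_hom_cring
begin

lemma img_sp:
  assumes "L \<subseteq> carrier R" "M \<subseteq> carrier R"
  shows "h ` smod_prod R L M = smod_prod S (h ` L) (h ` M)"
proof
  show "h ` smod_prod R L M \<subseteq> smod_prod S (h ` L) (h ` M)"
  proof
    fix y assume "y \<in> h ` smod_prod R L M"
    then obtain x where x: "x \<in> smod_prod R L M" "y = h x" by auto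
    have "h x \<in> smod_prod S (h ` L) (h ` M)" using x(1)
    proof (induction rule: smod_prod.induct)
      case zero
      then show ?case by (simp add: smod_prod.zero)
    next
      case (step a b z)
      have "z \<in> carrier R" using step R.sp_carrier assms by auto
      then have "h (a \<otimes> b \<oplus> z) = h a \<otimes>\<^bsub>S\<^esub> h b \<oplus>\<^bsub>S\<^esub> h z"
        using step assms by (auto simp: subset_iff)
      then show ?case using step by (auto intro: smod_prod.step)
    qed
    then show "y \<in> smod_prod S (h ` L) (h ` M)" using x by simp
  qed
  show "smod_prod S (h ` L) (h ` M) \<subseteq> h ` smod_prod R L M"
  proof
    fix y assume "y \<in> smod_prod S (h ` L) (h ` M)"
    then show "y \<in> h ` smod_prod R L M"
    proof (induction rule: smod_prod.induct)
      case zero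
      then show ?case by (auto intro!: image_eqI[where x="\<zero>"] smod_prod.zero)
    next
      case (step x y z)
      obtain a b c where abc: "a \<in> L" "b \<in> M" "c \<in> smod_prod R L M" "x = h a" "y = h b" "z = h c"
        using step by auto
      have "c \<in> carrier R" using abc R.sp_carrier assms by auto
      then have "h (a \<otimes> b \<oplus> c) = x \<otimes>\<^bsub>S\<^esub> y \<oplus>\<^bsub>S\<^esub> z"
        using abc assms by (auto simp: subset_iff)
      moreover have "a \<otimes> b \<oplus> c \<in> smod_prod R L M" using abc by (auto intro: smod_prod.step)
      ultimately show ?case by (metis image_eqI)
    qed
  qed
qed

lemma img_scale:
  assumes "L \<subseteq> carrier R" "u \<in> carrier R"
  shows "h ` scale R L u = scale S (h ` L) (h u)"
  unfolding scale_def image_image using assms by (intro image_cong refl) (auto simp: subset_iff)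

lemma img_rsubmod:
  assumes "K \<subseteq> carrier R" "rsubmod R K L"
  shows "rsubmod S (h ` K) (h ` L)"
proof -
  have c: "L \<subseteq> carrier R" using assms unfolding rsubmod_def by auto
  have 1: "h x \<oplus>\<^bsub>S\<^esub> h y \<in> h ` L" if "x \<in> L" "y \<in> L" for x y
  proof -
    have "x \<in> carrier R" "y \<in> carrier R" using that c by auto
    then have "h x \<oplus>\<^bsub>S\<^esub> h y = h (x \<oplus> y)" using ring_hom_add[OF homh, of x y] by simp
    then show ?thesis using that assms unfolding rsubmod_def by auto
  qed
  have 2: "\<ominus>\<^bsub>S\<^esub> h x \<in> h ` L" if "x \<in> L" for x
  proof -
    have "\<ominus>\<^bsub>S\<^esub> h x = h (\<ominus> x)" using that c by auto
    then show ?thesis using that assms unfolding rsubmod_def by auto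
  qed
  have 3: "h r \<otimes>\<^bsub>S\<^esub> h x \<in> h ` L" if "r \<in> K" "x \<in> L" for r x
  proof -
    have "x \<in> carrier R" "r \<in> carrier R" using that c assms by auto
    then have "h r \<otimes>\<^bsub>S\<^esub> h x = h (r \<otimes> x)" by simp
    then show ?thesis using that assms unfolding rsubmod_def by auto
  qed
  have 0: "\<zero>\<^bsub>S\<^esub> \<in> h ` L" using assms unfolding rsubmod_def by (auto intro!: image_eqI[where x="\<zero>"])
  show ?thesis unfolding rsubmod_def using c 0 1 2 3 by auto
qed

lemma img_Ginv:
  assumes "K \<subseteq> carrier R" "L \<in> Ginv R K"
  shows "h ` L \<in> Ginv S (h ` K)"
proof -
  obtain L' where L': "rsubmod R K L'" "smod_prod R L L' = K"
    using assms unfolding Ginv_def inv_ideal_def by auto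
  have c: "L \<subseteq> carrier R" "L' \<subseteq> carrier R"
    using R.Ginv_carrier[OF assms(2)] L'(1) unfolding rsubmod_def by auto
  show ?thesis unfolding Ginv_def inv_ideal_def
    using img_rsubmod[OF assms(1) R.Ginv_rsubmod[OF assms(2)]] img_rsubmod[OF assms(1) L'(1)]
      img_sp[OF c] L'(2) by auto
qed

lemma img_Units:
  assumes "u \<in> Units R"
  shows "h u \<in> Units S"
proof -
  have c: "u \<in> carrier R" "inv u \<in> carrier R" using assms by auto
  have 1: "h u \<otimes>\<^bsub>S\<^esub> h (inv u) = \<one>\<^bsub>S\<^esub>" using assms c
    by (simp add: hom_mult[symmetric])
  have 2: "h (inv u) \<otimes>\<^bsub>S\<^esub> h u = \<one>\<^bsub>S\<^esub>" using assms c
    by (simp add: hom_mult[symmetric])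
  show ?thesis unfolding Units_def using 1 2 c by auto
qed

lemma Cmap_Ccls:
  assumes K: "K \<subseteq> carrier R" and L: "L \<in> Ginv R K"
  shows "Cmap R S h K (Ccls R K L) = Ccls S (h ` K) (h ` L)"
proof -
  have c: "L \<subseteq> carrier R" using R.Ginv_carrier L by auto
  have K': "h ` K \<subseteq> carrier S" using K by auto
  have "Cmap R S h K (Ccls R K L) = {N \<in> Ginv S (h ` K). \<exists>u\<in>Units S. N = scale S (h ` L) u}"
  proof -
    have "(\<exists>L1\<in>Ccls R K L. \<exists>u\<in>Units S. N = scale S (h ` L1) u) \<longleftrightarrow> (\<exists>u\<in>Units S. N = scale S (h ` L) u)"
      for N
    proof
      assume "\<exists>L1\<in>Ccls R K L. \<exists>u\<in>Units S. N = scale S (h ` L1) u"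
      then obtain v u where vu: "v \<in> Units R" "u \<in> Units S" "N = scale S (h ` scale R L v) u"
        unfolding R.Ccls_eq[OF K L] by auto
      have cv: "v \<in> carrier R" "h v \<in> carrier S" "u \<in> carrier S" "h ` L \<subseteq> carrier S"
        using vu c by auto
      have "N = scale S (scale S (h ` L) (h v)) u" using vu img_scale[OF c cv(1)] by simp
      also have "\<dots> = scale S (h ` L) (h v \<otimes>\<^bsub>S\<^esub> u)"
        using S.scale_scale[OF cv(4,2,3)] .
      finally have "N = scale S (h ` L) (h v \<otimes>\<^bsub>S\<^esub> u)" .
      then show "\<exists>u\<in>Units S. N = scale S (h ` L) u" using vu img_Units by auto
    next
      assume "\<exists>u\<in>Units S. N = scale S (h ` L) u"
      then show "\<exists>L1\<in>Ccls R K L. \<exists>u\<in>Units S. N = scale S (h ` L1) u"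
        using R.Ccls_self[OF K L] by auto
    qed
    then show ?thesis unfolding Cmap_def by auto
  qed
  also have "\<dots> = Ccls S (h ` K) (h ` L)" unfolding Ccls_def by auto
  finally show ?thesis .
qed

end


lemma Cmap_iso_general:
  fixes B :: "('b,'m) ring_scheme" and T :: "('t,'k) ring_scheme"
  assumes cB: "cring B" and cT: "cring T"
    and phi: "\<phi> \<in> ring_hom B T" and mu: "\<mu> \<in> ring_hom T B"
    and retr: "\<And>b. b \<in> carrier B \<Longrightarrow> \<mu> (\<phi> b) = b"
    and K: "K \<subseteq> carrier B" "\<one>\<^bsub>B\<^esub> \<in> K"
  shows "Cmap B T \<phi> K \<in> iso (Cgrp B K) (Cgrp T (\<phi> ` K))"
proof -
  interpret B: cring B by (rule cB)
  interpret T: cring T by (rule cT)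
  interpret P: ring_hom_cring B T \<phi> by unfold_locales (rule phi)
  interpret M: ring_hom_cring T B \<mu> by unfold_locales (rule mu)
  let ?F = "Cmap B T \<phi> K"
  have K': "\<phi> ` K \<subseteq> carrier T" "\<one>\<^bsub>T\<^esub> \<in> \<phi> ` K"
    using K by (auto intro!: image_eqI[where x="\<one>\<^bsub>B\<^esub>"])
  have F: "?F (Ccls B K L) = Ccls T (\<phi> ` K) (\<phi> ` L)" if "L \<in> Ginv B K" for L
    using P.Cmap_Ccls[OF K(1) that] .
  have FG: "\<phi> ` L \<in> Ginv T (\<phi> ` K)" if "L \<in> Ginv B K" for L
    using P.img_Ginv[OF K(1) that] .
  have muphi: "\<mu> ` \<phi> ` Y = Y" if "Y \<subseteq> carrier B" for Y
  proof -
    have "(\<lambda>b. \<mu> (\<phi> b)) ` Y = (\<lambda>b. b) ` Y" by (rule image_cong) (use that retr in auto)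
    then show ?thesis by (simp add: image_image)
  qed
  have hom: "?F \<in> hom (Cgrp B K) (Cgrp T (\<phi> ` K))"
  proof (rule homI)
    fix x assume "x \<in> carrier (Cgrp B K)"
    then obtain L where L: "L \<in> Ginv B K" "x = Ccls B K L" unfolding Cgrp_def by auto
    show "?F x \<in> carrier (Cgrp T (\<phi> ` K))" using L F FG unfolding Cgrp_def by auto
  next
    fix x y assume "x \<in> carrier (Cgrp B K)" "y \<in> carrier (Cgrp B K)"
    then obtain L M where L: "L \<in> Ginv B K" "x = Ccls B K L" and M: "M \<in> Ginv B K" "y = Ccls B K M"
      unfolding Cgrp_def by auto
    have c: "L \<subseteq> carrier B" "M \<subseteq> carrier B" using L M B.Ginv_carrier by auto
    have "?F (x \<otimes>\<^bsub>Cgrp B K\<^esub> y) = ?F (Ccls B K (smod_prod B L M))"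
      using B.Cgrp_mult[OF K L(1) M(1)] L M by simp
    also have "\<dots> = Ccls T (\<phi> ` K) (\<phi> ` smod_prod B L M)"
      using F B.sp_Ginv[OF K L(1) M(1)] by simp
    also have "\<dots> = Ccls T (\<phi> ` K) (smod_prod T (\<phi> ` L) (\<phi> ` M))"
      using P.img_sp[OF c] by simp
    also have "\<dots> = Ccls T (\<phi> ` K) (\<phi> ` L) \<otimes>\<^bsub>Cgrp T (\<phi> ` K)\<^esub> Ccls T (\<phi> ` K) (\<phi> ` M)"
      using T.Cgrp_mult[OF K' FG[OF L(1)] FG[OF M(1)]] by simp
    also have "\<dots> = ?F x \<otimes>\<^bsub>Cgrp T (\<phi> ` K)\<^esub> ?F y" using F L M by simp
    finally show "?F (x \<otimes>\<^bsub>Cgrp B K\<^esub> y) = ?F x \<otimes>\<^bsub>Cgrp T (\<phi> ` K)\<^esub> ?F y" .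
  qed
  have inj: "inj_on ?F (carrier (Cgrp B K))"
  proof (rule inj_onI)
    fix x y assume "x \<in> carrier (Cgrp B K)" "y \<in> carrier (Cgrp B K)" and eq: "?F x = ?F y"
    then obtain L M where L: "L \<in> Ginv B K" "x = Ccls B K L" and M: "M \<in> Ginv B K" "y = Ccls B K M"
      unfolding Cgrp_def by auto
    have c: "L \<subseteq> carrier B" "M \<subseteq> carrier B" using L M B.Ginv_carrier by auto
    have "Ccls T (\<phi> ` K) (\<phi> ` L) = Ccls T (\<phi> ` K) (\<phi> ` M)" using eq F L M by simp
    then obtain w where w: "w \<in> Units T" "\<phi> ` M = scale T (\<phi> ` L) w"
      using T.Ccls_eqD[OF K'(1) FG[OF L(1)] FG[OF M(1)]] by auto
    have "M = \<mu> ` \<phi> ` M" using muphi c by simp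
    also have "\<dots> = scale B (\<mu> ` \<phi> ` L) (\<mu> w)"
    proof -
      have "\<phi> ` L \<subseteq> carrier T" "w \<in> carrier T" using c w by auto
      then show ?thesis using w(2) M.img_scale[of "\<phi> ` L" w] by simp
    qed
    also have "\<dots> = scale B L (\<mu> w)" using muphi c by simp
    finally have "M = scale B L (\<mu> w)" .
    then have "Ccls B K M = Ccls B K L" using B.Ccls_scale[OF K(1) L(1) M.img_Units[OF w(1)]] by simp
    then show "x = y" using L M by simp
  qed
  have surj: "?F ` carrier (Cgrp B K) = carrier (Cgrp T (\<phi> ` K))"
  proof
    show "?F ` carrier (Cgrp B K) \<subseteq> carrier (Cgrp T (\<phi> ` K))"
      using hom unfolding hom_def by auto
    show "carrier (Cgrp T (\<phi> ` K)) \<subseteq> ?F ` carrier (Cgrp B K)"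
    proof
      fix y assume "y \<in> carrier (Cgrp T (\<phi> ` K))"
      then obtain N where N: "N \<in> Ginv T (\<phi> ` K)" "y = Ccls T (\<phi> ` K) N" unfolding Cgrp_def by auto
      obtain N' where N': "rsubmod T (\<phi> ` K) N'" "smod_prod T N N' = \<phi> ` K"
        using N unfolding Ginv_def inv_ideal_def by auto
      have cN: "N \<subseteq> carrier T" "N' \<subseteq> carrier T"
        using T.Ginv_carrier[OF N(1)] N'(1) unfolding rsubmod_def by auto
      have fix1: "\<phi> (\<mu> x) = x" if "x \<in> smod_prod T N N'" for x
        using that N'(2) retr K by auto
      have st1: "\<exists>w\<in>carrier T. \<forall>n\<in>N. \<phi> (\<mu> n) \<otimes>\<^bsub>T\<^esub> w = n \<otimes>\<^bsub>T\<^esub> z"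
        if "z \<in> smod_prod T N N'" for z
        using that
      proof (induction rule: smod_prod.induct)
        case zero
        show ?case using cN by (auto intro!: bexI[where x="\<zero>\<^bsub>T\<^esub>"])
      next
        case (step a b z)
        then obtain w where w: "w \<in> carrier T" "\<forall>n\<in>N. \<phi> (\<mu> n) \<otimes>\<^bsub>T\<^esub> w = n \<otimes>\<^bsub>T\<^esub> z" by auto
        have ca: "a \<in> carrier T" "b \<in> carrier T" "z \<in> carrier T"
          using step cN T.sp_carrier[OF cN] by auto
        have "\<phi> (\<mu> n) \<otimes>\<^bsub>T\<^esub> (a \<otimes>\<^bsub>T\<^esub> \<phi> (\<mu> b) \<oplus>\<^bsub>T\<^esub> w) = n \<otimes>\<^bsub>T\<^esub> (a \<otimes>\<^bsub>T\<^esub> b \<oplus>\<^bsub>T\<^esub> z)"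
          if n: "n \<in> N" for n
        proof -
          have cn: "n \<in> carrier T" using n cN by auto
          have "\<phi> (\<mu> n) \<otimes>\<^bsub>T\<^esub> \<phi> (\<mu> b) = \<phi> (\<mu> (n \<otimes>\<^bsub>T\<^esub> b))" using cn ca by simp
          also have "\<dots> = n \<otimes>\<^bsub>T\<^esub> b" using fix1 T.sp_prod[OF cN n step(2)] by simp
          finally have e1: "\<phi> (\<mu> n) \<otimes>\<^bsub>T\<^esub> \<phi> (\<mu> b) = n \<otimes>\<^bsub>T\<^esub> b" .
          have cm: "\<phi> (\<mu> n) \<in> carrier T" "\<phi> (\<mu> b) \<in> carrier T" using cn ca by auto
          have "\<phi> (\<mu> n) \<otimes>\<^bsub>T\<^esub> (a \<otimes>\<^bsub>T\<^esub> \<phi> (\<mu> b) \<oplus>\<^bsub>T\<^esub> w) =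
              a \<otimes>\<^bsub>T\<^esub> (\<phi> (\<mu> n) \<otimes>\<^bsub>T\<^esub> \<phi> (\<mu> b)) \<oplus>\<^bsub>T\<^esub> \<phi> (\<mu> n) \<otimes>\<^bsub>T\<^esub> w"
            using cm ca w(1) by algebra
          also have "\<dots> = a \<otimes>\<^bsub>T\<^esub> (n \<otimes>\<^bsub>T\<^esub> b) \<oplus>\<^bsub>T\<^esub> n \<otimes>\<^bsub>T\<^esub> z" using e1 w(2) n by simp
          also have "\<dots> = n \<otimes>\<^bsub>T\<^esub> (a \<otimes>\<^bsub>T\<^esub> b \<oplus>\<^bsub>T\<^esub> z)" using cn ca by algebra
          finally show ?thesis .
        qed
        moreover have "a \<otimes>\<^bsub>T\<^esub> \<phi> (\<mu> b) \<oplus>\<^bsub>T\<^esub> w \<in> carrier T" using ca w by auto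
        ultimately show ?case by blast
      qed
      have one_in: "\<one>\<^bsub>T\<^esub> \<in> smod_prod T N N'" using N'(2) K' by simp
      obtain w0 where w0: "w0 \<in> carrier T" "\<forall>n\<in>N. \<phi> (\<mu> n) \<otimes>\<^bsub>T\<^esub> w0 = n"
        using st1[OF one_in] cN by (metis T.r_one subsetD)
      have st2: "\<exists>w'\<in>carrier T. w0 \<otimes>\<^bsub>T\<^esub> w' = y" if "y \<in> smod_prod T N N'" for y
        using that
      proof (induction rule: smod_prod.induct)
        case zero
        show ?case using w0 by (auto intro!: bexI[where x="\<zero>\<^bsub>T\<^esub>"])
      next
        case (step a b y)
        then obtain w' where w': "w' \<in> carrier T" "w0 \<otimes>\<^bsub>T\<^esub> w' = y" by auto
        have ca: "a \<in> carrier T" "b \<in> carrier T" "\<phi> (\<mu> a) \<in> carrier T"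
          using step cN by auto
        have "w0 \<otimes>\<^bsub>T\<^esub> (\<phi> (\<mu> a) \<otimes>\<^bsub>T\<^esub> b \<oplus>\<^bsub>T\<^esub> w') = (\<phi> (\<mu> a) \<otimes>\<^bsub>T\<^esub> w0) \<otimes>\<^bsub>T\<^esub> b \<oplus>\<^bsub>T\<^esub> w0 \<otimes>\<^bsub>T\<^esub> w'"
          using ca w0(1) w'(1) by algebra
        also have "\<dots> = a \<otimes>\<^bsub>T\<^esub> b \<oplus>\<^bsub>T\<^esub> y" using w0(2) step(1) w'(2) by simp
        finally show ?case using ca w' by (auto intro!: bexI[where x="\<phi> (\<mu> a) \<otimes>\<^bsub>T\<^esub> b \<oplus>\<^bsub>T\<^esub> w'"])
      qed
      obtain w' where w': "w' \<in> carrier T" "w0 \<otimes>\<^bsub>T\<^esub> w' = \<one>\<^bsub>T\<^esub>" using st2[OF one_in] by auto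
      have w0U: "w0 \<in> Units T" unfolding Units_def using w0(1) w' T.m_comm[OF w0(1) w'(1)] by auto
      define L where "L = \<mu> ` N"
      have LG: "L \<in> Ginv B K"
        using M.img_Ginv[OF K'(1) N(1)] muphi[OF K(1)] unfolding L_def by simp
      have "scale T (\<phi> ` L) w0 = (\<lambda>n. \<phi> (\<mu> n) \<otimes>\<^bsub>T\<^esub> w0) ` N"
        unfolding scale_def L_def image_image by simp
      also have "\<dots> = N" using w0(2) by simp
      finally have NL: "N = scale T (\<phi> ` L) w0" by simp
      have "y = Ccls T (\<phi> ` K) (\<phi> ` L)"
        using N(2) NL T.Ccls_scale[OF K'(1) FG[OF LG] w0U] by simp
      then have "y = ?F (Ccls B K L)" using F[OF LG] by simp
      moreover have "Ccls B K L \<in> carrier (Cgrp B K)" using LG unfolding Cgrp_def by simp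
      ultimately show "y \<in> ?F ` carrier (Cgrp B K)" by blast
    qed
  qed
  show ?thesis unfolding iso_def bij_betw_def using hom inj surj by simp
qed


definition spt :: "('b \<times> 'b \<Rightarrow> int) \<Rightarrow> ('b \<times> 'b) set" where
  "spt f = {p. f p \<noteq> 0}"

abbreviation dl :: "'b \<times> 'b \<Rightarrow> ('b \<times> 'b \<Rightarrow> int)" where
  "dl q \<equiv> delta (fst q) (snd q)"

definition mp :: "('b,'m) ring_scheme \<Rightarrow> 'b \<times> 'b \<Rightarrow> 'b \<times> 'b \<Rightarrow> 'b \<times> 'b" where
  "mp B q r = (fst q \<otimes>\<^bsub>B\<^esub> fst r, snd q \<otimes>\<^bsub>B\<^esub> snd r)"

lemma dl_apply: "dl q p = (if p = q then 1 else 0)"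
  unfolding delta_def by (cases q) auto

lemma spt_dl: "spt (dl q) = {q}"
  unfolding spt_def dl_apply by auto

lemma spt_delta: "spt (delta x y) = {(x, y)}"
  unfolding spt_def delta_def by auto

lemma spt_zero: "spt (\<lambda>_. 0) = {}"
  unfolding spt_def by auto

lemma fsums_iff: "f \<in> fsums B \<longleftrightarrow> finite (spt f) \<and> spt f \<subseteq> carrier B \<times> carrier B"
  unfolding fsums_def spt_def by auto

lemma spt_lc: "spt (\<lambda>p. f p + c * g p) \<subseteq> spt f \<union> spt g"
  unfolding spt_def by auto

lemma fsums_lc: "f \<in> fsums B \<Longrightarrow> g \<in> fsums B \<Longrightarrow> (\<lambda>p. f p + c * g p) \<in> fsums B"
  unfolding fsums_iff using spt_lc[of f c g] by (meson finite_Un finite_subset le_sup_iff order_trans)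

lemma fsums_zero: "(\<lambda>_. 0) \<in> fsums B"
  unfolding fsums_iff spt_zero by auto

lemma fsums_dl: "q \<in> carrier B \<times> carrier B \<Longrightarrow> dl q \<in> fsums B"
  unfolding fsums_iff spt_dl by auto

lemma fsums_diff: "f \<in> fsums B \<Longrightarrow> g \<in> fsums B \<Longrightarrow> (\<lambda>p. f p - g p) \<in> fsums B"
  using fsums_lc[of f B g "-1"] by simp

lemma fsums_add: "f \<in> fsums B \<Longrightarrow> g \<in> fsums B \<Longrightarrow> (\<lambda>p. f p + g p) \<in> fsums B"
  using fsums_lc[of f B g "1"] by simp

lemma fsums_neg: "g \<in> fsums B \<Longrightarrow> (\<lambda>p. - g p) \<in> fsums B"
  unfolding fsums_iff spt_def by auto

lemma fsums_induct[consumes 1, case_names zero step]: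
  assumes f: "f \<in> fsums B" and z: "P (\<lambda>_. 0)"
    and st: "\<And>f q c. f \<in> fsums B \<Longrightarrow> q \<in> carrier B \<times> carrier B \<Longrightarrow> P f \<Longrightarrow> P (\<lambda>p. f p + c * dl q p)"
  shows "P f"
proof -
  have "\<forall>f. spt f = S \<longrightarrow> S \<subseteq> carrier B \<times> carrier B \<longrightarrow> P f" if "finite S" for S
    using that
  proof (induction S rule: finite_induct)
    case empty
    show ?case
    proof (intro allI impI)
      fix f :: "'a \<times> 'a \<Rightarrow> int" assume "spt f = {}"
      then have "f = (\<lambda>_. 0)" unfolding spt_def by auto
      then show "P f" using z by simp
    qed
  next
    case (insert q S)
    show ?case
    proof (intro allI impI)
      fix f :: "'a \<times> 'a \<Rightarrow> int" assume sf: "spt f = insert q S" and sc: "insert q S \<subseteq> carrier B \<times> carrier B"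
      define f' where "f' = f(q := 0)"
      have sf': "spt f' = S" using sf insert(2) unfolding f'_def spt_def by auto
      have "P f'" using insert(3) sf' sc by auto
      moreover have "f' \<in> fsums B" using sf' sc insert(1) unfolding fsums_iff by auto
      moreover have "f = (\<lambda>p. f' p + f q * dl q p)" unfolding f'_def dl_apply by auto
      ultimately show "P f" using st[of f' q "f q"] sc by auto
    qed
  qed
  then show ?thesis using f unfolding fsums_iff by auto
qed

lemma conv_alt:
  assumes "finite S1" "finite S2" "spt f \<subseteq> S1" "spt g \<subseteq> S2"
  shows "conv B f g p = (\<Sum>q\<in>S1. \<Sum>r\<in>S2. if mp B q r = p then f q * g r else 0)"
proof -
  let ?F = "\<lambda>(q, r). if mp B q r = p then f q * g r else 0"
  have "(\<Sum>x\<in>S1 \<times> S2. ?F x) = (\<Sum>x\<in>spt f \<times> spt g. ?F x)"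
    by (rule sum.mono_neutral_right) (use assms in \<open>auto simp: spt_def\<close>)
  moreover have "conv B f g p = (\<Sum>x\<in>spt f \<times> spt g. ?F x)"
    unfolding conv_def spt_def mp_def by simp
  ultimately show ?thesis by (simp add: sum.cartesian_product)
qed

lemma conv_lin_r:
  assumes "finite (spt f)" "finite (spt g)" "finite (spt h)"
  shows "conv B f (\<lambda>p. g p + c * h p) = (\<lambda>p. conv B f g p + c * conv B f h p)"
proof
  fix p
  let ?S = "spt g \<union> spt h"
  have fS: "finite ?S" using assms by auto
  have "conv B f (\<lambda>p. g p + c * h p) p =
      (\<Sum>q\<in>spt f. \<Sum>r\<in>?S. if mp B q r = p then f q * (g r + c * h r) else 0)"
    by (rule conv_alt) (use assms spt_lc in auto)
  also have "\<dots> = (\<Sum>q\<in>spt f. \<Sum>r\<in>?S. (if mp B q r = p then f q * g r else 0) + c * (if mp B q r = p then f q * h r else 0))"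
    by (intro sum.cong refl) (auto simp: algebra_simps)
  also have "\<dots> = (\<Sum>q\<in>spt f. \<Sum>r\<in>?S. if mp B q r = p then f q * g r else 0) + c * (\<Sum>q\<in>spt f. \<Sum>r\<in>?S. if mp B q r = p then f q * h r else 0)"
    by (simp add: sum.distrib sum_distrib_left)
  also have "\<dots> = conv B f g p + c * conv B f h p"
    using conv_alt[of "spt f" ?S f g B p] conv_alt[of "spt f" ?S f h B p] assms by auto
  finally show "conv B f (\<lambda>p. g p + c * h p) p = conv B f g p + c * conv B f h p" .
qed

lemma conv_lin_l:
  assumes "finite (spt f)" "finite (spt g)" "finite (spt h)"
  shows "conv B (\<lambda>p. f p + c * g p) h = (\<lambda>p. conv B f h p + c * conv B g h p)"
proof
  fix p
  let ?S = "spt f \<union> spt g"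
  have fS: "finite ?S" using assms by auto
  have "conv B (\<lambda>p. f p + c * g p) h p =
      (\<Sum>q\<in>?S. \<Sum>r\<in>spt h. if mp B q r = p then (f q + c * g q) * h r else 0)"
    by (rule conv_alt) (use assms spt_lc in auto)
  also have "\<dots> = (\<Sum>q\<in>?S. \<Sum>r\<in>spt h. (if mp B q r = p then f q * h r else 0) + c * (if mp B q r = p then g q * h r else 0))"
    by (intro sum.cong refl) (auto simp: algebra_simps)
  also have "\<dots> = (\<Sum>q\<in>?S. \<Sum>r\<in>spt h. if mp B q r = p then f q * h r else 0) + c * (\<Sum>q\<in>?S. \<Sum>r\<in>spt h. if mp B q r = p then g q * h r else 0)"
    by (simp add: sum.distrib sum_distrib_left)
  also have "\<dots> = conv B f h p + c * conv B g h p"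
    using conv_alt[of ?S "spt h" f h B p] conv_alt[of ?S "spt h" g h B p] assms by auto
  finally show "conv B (\<lambda>p. f p + c * g p) h p = conv B f h p + c * conv B g h p" .
qed

lemma conv_zero_l: "conv B (\<lambda>_. 0) h = (\<lambda>_. 0)"
  unfolding conv_def by simp

lemma conv_zero_r: "conv B h (\<lambda>_. 0) = (\<lambda>_. 0)"
  unfolding conv_def by simp

lemma conv_dl: "conv B (dl q) (dl r) = dl (mp B q r)"
proof
  fix p
  have "conv B (dl q) (dl r) p = (\<Sum>q'\<in>{q}. \<Sum>r'\<in>{r}. if mp B q' r' = p then dl q q' * dl r r' else 0)"
    by (rule conv_alt) (auto simp: spt_dl)
  then show "conv B (dl q) (dl r) p = dl (mp B q r) p" by (auto simp: dl_apply)
qed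

lemma spt_conv:
  "spt (conv B f g) \<subseteq> (\<lambda>(q, r). mp B q r) ` (spt f \<times> spt g)"
proof
  fix p assume "p \<in> spt (conv B f g)"
  then have "(\<Sum>(q, r)\<in>spt f \<times> spt g. if mp B q r = p then f q * g r else 0) \<noteq> 0"
    unfolding spt_def conv_def mp_def by simp
  then obtain x where "x \<in> spt f \<times> spt g" "(case x of (q, r) \<Rightarrow> if mp B q r = p then f q * g r else 0) \<noteq> 0"
    using sum.not_neutral_contains_not_neutral by blast
  then show "p \<in> (\<lambda>(q, r). mp B q r) ` (spt f \<times> spt g)"
    by (cases x) (auto split: if_splits)
qed

context cring
begin

lemma mp_carrier: "q \<in> carrier R \<times> carrier R \<Longrightarrow> r \<in> carrier R \<times> carrier R \<Longrightarrow> mp R q r \<in> carrier R \<times> carrier R"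
  unfolding mp_def by auto

lemma mp_comm: "q \<in> carrier R \<times> carrier R \<Longrightarrow> r \<in> carrier R \<times> carrier R \<Longrightarrow> mp R q r = mp R r q"
  unfolding mp_def by (auto simp: m_comm)

lemma mp_assoc: "q \<in> carrier R \<times> carrier R \<Longrightarrow> r \<in> carrier R \<times> carrier R \<Longrightarrow> s \<in> carrier R \<times> carrier R \<Longrightarrow>
    mp R (mp R q r) s = mp R q (mp R r s)"
  unfolding mp_def by (auto simp: m_assoc)

lemma fsums_conv:
  assumes "f \<in> fsums R" "g \<in> fsums R"
  shows "conv R f g \<in> fsums R"
proof -
  have "(\<lambda>(q, r). mp R q r) ` (spt f \<times> spt g) \<subseteq> carrier R \<times> carrier R"
  proof (rule image_subsetI)
    fix x assume "x \<in> spt f \<times> spt g"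
    then obtain q r where qr: "x = (q, r)" "q \<in> spt f" "r \<in> spt g" by auto
    then have "q \<in> carrier R \<times> carrier R" "r \<in> carrier R \<times> carrier R"
      using assms unfolding fsums_iff by auto
    then show "(\<lambda>(q, r). mp R q r) x \<in> carrier R \<times> carrier R" using qr mp_carrier by simp
  qed
  moreover have "finite ((\<lambda>(q, r). mp R q r) ` (spt f \<times> spt g))" using assms unfolding fsums_iff by auto
  ultimately show ?thesis unfolding fsums_iff using spt_conv[of R f g] by (meson finite_subset order_trans)
qed

lemma conv_comm:
  assumes "f \<in> fsums R" "g \<in> fsums R"
  shows "conv R f g = conv R g f"
proof
  fix p
  have "conv R f g p = (\<Sum>q\<in>spt f. \<Sum>r\<in>spt g. if mp R q r = p then f q * g r else 0)"
    by (rule conv_alt) (use assms in \<open>auto simp: fsums_iff\<close>)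
  also have "\<dots> = (\<Sum>r\<in>spt g. \<Sum>q\<in>spt f. if mp R q r = p then f q * g r else 0)"
    by (rule sum.swap)
  also have "\<dots> = (\<Sum>r\<in>spt g. \<Sum>q\<in>spt f. if mp R r q = p then g r * f q else 0)"
    using assms unfolding fsums_iff by (intro sum.cong refl) (auto simp: mp_comm subset_iff)
  also have "\<dots> = conv R g f p"
    by (rule conv_alt[symmetric]) (use assms in \<open>auto simp: fsums_iff\<close>)
  finally show "conv R f g p = conv R g f p" .
qed

lemma conv_assoc_dl3:
  assumes "q \<in> carrier R \<times> carrier R" "r \<in> carrier R \<times> carrier R" "h \<in> fsums R"
  shows "conv R (dl (mp R q r)) h = conv R (dl q) (conv R (dl r) h)"
  using assms(3)
proof (induction rule: fsums_induct)
  case zero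
  then show ?case by (simp add: conv_zero_r)
next
  case (step h s c)
  have fh: "finite (spt h)" using step unfolding fsums_iff by auto
  have "conv R (dl (mp R q r)) (\<lambda>p. h p + c * dl s p) = (\<lambda>p. conv R (dl (mp R q r)) h p + c * dl (mp R (mp R q r) s) p)"
    using conv_lin_r[of "dl (mp R q r)" h "dl s" R c] fh by (simp add: spt_dl conv_dl)
  moreover have "conv R (dl q) (conv R (dl r) (\<lambda>p. h p + c * dl s p)) =
      (\<lambda>p. conv R (dl q) (conv R (dl r) h) p + c * dl (mp R q (mp R r s)) p)"
  proof -
    have "conv R (dl r) (\<lambda>p. h p + c * dl s p) = (\<lambda>p. conv R (dl r) h p + c * dl (mp R r s) p)"
      using conv_lin_r[of "dl r" h "dl s" R c] fh by (simp add: spt_dl conv_dl)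
    moreover have "finite (spt (conv R (dl r) h))"
      using fsums_conv[OF fsums_dl[OF assms(2)] step(1)] unfolding fsums_iff by auto
    ultimately show ?thesis
      using conv_lin_r[of "dl q" "conv R (dl r) h" "dl (mp R r s)" R c] by (simp add: spt_dl conv_dl)
  qed
  ultimately show ?case using step mp_assoc assms by simp
qed

lemma conv_assoc_dl:
  assumes "q \<in> carrier R \<times> carrier R" "g \<in> fsums R" "h \<in> fsums R"
  shows "conv R (conv R (dl q) g) h = conv R (dl q) (conv R g h)"
  using assms(2)
proof (induction rule: fsums_induct)
  case zero
  then show ?case by (simp add: conv_zero_r conv_zero_l)
next
  case (step g r c)
  have fg: "finite (spt g)" "finite (spt h)" using step assms unfolding fsums_iff by auto
  have fc: "finite (spt (conv R (dl q) g))" "finite (spt (conv R g h))" "finite (spt (conv R (dl r) h))"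
    using fsums_conv[OF fsums_dl[OF assms(1)] step(1)] fsums_conv[OF step(1) assms(3)]
      fsums_conv[OF fsums_dl[OF step(2)] assms(3)]
    unfolding fsums_iff by auto
  have "conv R (dl q) (\<lambda>p. g p + c * dl r p) = (\<lambda>p. conv R (dl q) g p + c * dl (mp R q r) p)"
    using conv_lin_r[of "dl q" g "dl r" R c] fg by (simp add: spt_dl conv_dl)
  then have L: "conv R (conv R (dl q) (\<lambda>p. g p + c * dl r p)) h =
      (\<lambda>p. conv R (conv R (dl q) g) h p + c * conv R (dl (mp R q r)) h p)"
    using conv_lin_l[of "conv R (dl q) g" "dl (mp R q r)" h R c] fc fg by (simp add: spt_dl)
  have "conv R (\<lambda>p. g p + c * dl r p) h = (\<lambda>p. conv R g h p + c * conv R (dl r) h p)"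
    using conv_lin_l[of g "dl r" h R c] fg by (simp add: spt_dl)
  then have Rr: "conv R (dl q) (conv R (\<lambda>p. g p + c * dl r p) h) =
     (\<lambda>p. conv R (dl q) (conv R g h) p + c * conv R (dl q) (conv R (dl r) h) p)"
    using conv_lin_r[of "dl q" "conv R g h" "conv R (dl r) h" R c] fc by (simp add: spt_dl)
  show ?case using L Rr step conv_assoc_dl3[OF assms(1) step(2) assms(3)] by simp
qed

lemma conv_assoc:
  assumes "f \<in> fsums R" "g \<in> fsums R" "h \<in> fsums R"
  shows "conv R (conv R f g) h = conv R f (conv R g h)"
  using assms(1)
proof (induction rule: fsums_induct)
  case zero
  then show ?case by (simp add: conv_zero_l)
next
  case (step f q c)
  have fg: "finite (spt f)" "finite (spt g)" "finite (spt h)" using step assms unfolding fsums_iff by auto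
  have fc: "finite (spt (conv R f g))" "finite (spt (conv R (dl q) g))" "finite (spt (conv R g h))"
    using fsums_conv[OF step(1) assms(2)] fsums_conv[OF fsums_dl[OF step(2)] assms(2)]
      fsums_conv[OF assms(2,3)]
    unfolding fsums_iff by auto
  have "conv R (\<lambda>p. f p + c * dl q p) g = (\<lambda>p. conv R f g p + c * conv R (dl q) g p)"
    using conv_lin_l[of f "dl q" g R c] fg by (simp add: spt_dl)
  then have L: "conv R (conv R (\<lambda>p. f p + c * dl q p) g) h =
      (\<lambda>p. conv R (conv R f g) h p + c * conv R (conv R (dl q) g) h p)"
    using conv_lin_l[of "conv R f g" "conv R (dl q) g" h R c] fc fg by simp
  have Rr: "conv R (\<lambda>p. f p + c * dl q p) (conv R g h) =
      (\<lambda>p. conv R f (conv R g h) p + c * conv R (dl q) (conv R g h) p)"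
    using conv_lin_l[of f "dl q" "conv R g h" R c] fg fc by (simp add: spt_dl)
  show ?case using L Rr step conv_assoc_dl[OF step(2) assms(2,3)] by simp
qed

lemma conv_one:
  assumes "f \<in> fsums R"
  shows "conv R (delta \<one> \<one>) f = f"
  using assms
proof (induction rule: fsums_induct)
  case zero
  then show ?case by (simp add: conv_zero_r)
next
  case (step f q c)
  have fg: "finite (spt f)" using step unfolding fsums_iff by auto
  have "mp R (\<one>, \<one>) q = q" using step(2) unfolding mp_def by auto
  then have "conv R (dl (\<one>, \<one>)) (\<lambda>p. f p + c * dl q p) = (\<lambda>p. f p + c * dl q p)"
    using conv_lin_r[of "dl (\<one>, \<one>)" f "dl q" R c] fg step(3) conv_dl[of R "(\<one>, \<one>)" q]
    by (simp add: spt_dl spt_delta)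
  then show ?case by simp
qed

end


locale tsetup = cring R for R (structure) + fixes A assumes subA: "subring A R"
begin

lemma A_carr: "A \<subseteq> carrier R"
  using subA subringE(1) by blast

abbreviation "RL \<equiv> tens_rels R A"

lemma conv_delta: "conv B (delta a b) (delta x y) = dl (mp B (a, b) (x, y))"
  using conv_dl[of B "(a, b)" "(x, y)"] by simp

lemma rels_cong: "f \<in> RL \<Longrightarrow> (\<And>p. g p = f p) \<Longrightarrow> g \<in> RL"
proof -
  assume "f \<in> RL" "\<And>p. g p = f p"
  then have "g = f" by auto
  then show ?thesis using \<open>f \<in> RL\<close> by simp
qed

lemma fsums_delta: "x \<in> carrier R \<Longrightarrow> y \<in> carrier R \<Longrightarrow> delta x y \<in> fsums R"
  using fsums_dl[of "(x, y)" R] by simp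

lemma rels_fsums: "f \<in> RL \<Longrightarrow> f \<in> fsums R"
proof (induction rule: tens_rels.induct)
  case zero
  then show ?case by (rule fsums_zero)
next
  case (addl x x' y)
  then have "delta (x \<oplus> x') y \<in> fsums R" "delta x y \<in> fsums R" "delta x' y \<in> fsums R"
    by (auto intro!: fsums_delta)
  from fsums_diff[OF fsums_diff[OF this(1,2)] this(3)] show ?case by simp
next
  case (addr x y y')
  then have "delta x (y \<oplus> y') \<in> fsums R" "delta x y \<in> fsums R" "delta x y' \<in> fsums R"
    by (auto intro!: fsums_delta)
  from fsums_diff[OF fsums_diff[OF this(1,2)] this(3)] show ?case by simp
next
  case (bal a x y)
  then have "delta (a \<otimes> x) y \<in> fsums R" "delta x (a \<otimes> y) \<in> fsums R"
    using A_carr by (auto intro!: fsums_delta)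
  from fsums_diff[OF this(1,2)] show ?case by simp
next
  case (diff f g)
  from fsums_diff[OF diff(3,4)] show ?case by simp
qed

lemma rels_neg:
  assumes f: "f \<in> RL" shows "(\<lambda>p. - f p) \<in> RL"
proof -
  have "(\<lambda>p. (\<lambda>_. 0) p - f p) \<in> RL" by (rule tens_rels.diff[OF tens_rels.zero f])
  then show ?thesis by (rule rels_cong) simp
qed

lemma rels_add:
  assumes f: "f \<in> RL" and g: "g \<in> RL" shows "(\<lambda>p. f p + g p) \<in> RL"
proof -
  have "(\<lambda>p. f p - (\<lambda>p. - g p) p) \<in> RL" by (rule tens_rels.diff[OF f rels_neg[OF g]])
  then show ?thesis by (rule rels_cong) simp
qed

lemma rels_diff: "f \<in> RL \<Longrightarrow> g \<in> RL \<Longrightarrow> (\<lambda>p. f p - g p) \<in> RL"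
  by (rule tens_rels.diff)

lemma rels_smul_nat: "f \<in> RL \<Longrightarrow> (\<lambda>p. int n * f p) \<in> RL"
proof (induction n)
  case 0
  show ?case using tens_rels.zero by (rule rels_cong) simp
next
  case (Suc n)
  then have "(\<lambda>p. int n * f p + f p) \<in> RL" using rels_add by auto
  then show ?case by (rule rels_cong) (simp add: algebra_simps)
qed

lemma rels_smul:
  assumes f: "f \<in> RL" shows "(\<lambda>p. c * f p) \<in> RL"
proof (cases "c \<ge> 0")
  case True
  then have "int (nat c) = c" by simp
  then show ?thesis using rels_smul_nat[OF f, of "nat c"] by simp
next
  case False
  then have e: "int (nat (- c)) = - c" by simp
  have "(\<lambda>p. - (int (nat (- c)) * f p)) \<in> RL" by (rule rels_neg[OF rels_smul_nat[OF f, of "nat (- c)"]])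
  then have "(\<lambda>p. - ((- c) * f p)) \<in> RL" unfolding e .
  then show ?thesis by simp
qed

lemma rels_lc:
  assumes f: "f \<in> RL" and g: "g \<in> RL" shows "(\<lambda>p. f p + c * g p) \<in> RL"
  using rels_add[OF f rels_smul[OF g]] by simp

lemma conv_dl3:
  assumes "finite (spt f)"
  shows "conv R f (\<lambda>p. dl a p - dl b p - dl c p) = (\<lambda>p. conv R f (dl a) p - conv R f (dl b) p - conv R f (dl c) p)"
proof -
  have e: "(\<lambda>p. dl a p - dl b p - dl c p) = (\<lambda>p. (\<lambda>p. dl a p + (-1) * dl b p) p + (-1) * dl c p)"
    by auto
  have f2: "finite (spt (\<lambda>p. dl a p + (-1) * dl b p))"
    using spt_lc[of "dl a" "-1" "dl b"] by (simp add: spt_dl finite_subset)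
  show ?thesis unfolding e
    using conv_lin_r[OF assms f2, of "dl c" R "-1"] conv_lin_r[OF assms, of "dl a" "dl b" R "-1"]
    by (simp add: spt_dl)
qed

lemma conv_dl2:
  assumes "finite (spt f)"
  shows "conv R f (\<lambda>p. dl a p - dl b p) = (\<lambda>p. conv R f (dl a) p - conv R f (dl b) p)"
proof -
  have e: "(\<lambda>p. dl a p - dl b p) = (\<lambda>p. dl a p + (-1) * dl b p)"
    by auto
  show ?thesis unfolding e
    using conv_lin_r[OF assms, of "dl a" "dl b" R "-1"] by (simp add: spt_dl)
qed

lemma conv_dl_rels:
  assumes q: "q \<in> carrier R \<times> carrier R" and g: "g \<in> RL"
  shows "conv R (dl q) g \<in> RL"
  using g
proof (induction rule: tens_rels.induct)
  case zero
  then show ?case by (simp add: conv_zero_r tens_rels.zero)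
next
  case (addl x x' y)
  have "conv R (dl q) (\<lambda>p. dl (x \<oplus> x', y) p - dl (x, y) p - dl (x', y) p) =
     (\<lambda>p. dl (mp R q (x \<oplus> x', y)) p - dl (mp R q (x, y)) p - dl (mp R q (x', y)) p)"
    using conv_dl3[of "dl q" "(x \<oplus> x', y)" "(x, y)" "(x', y)"] by (simp add: spt_dl conv_delta)
  moreover have "mp R q (x \<oplus> x', y) = (fst q \<otimes> x \<oplus> fst q \<otimes> x', snd q \<otimes> y)"
    using q addl unfolding mp_def by (auto simp: r_distr)
  moreover have "(\<lambda>p. delta (fst q \<otimes> x \<oplus> fst q \<otimes> x') (snd q \<otimes> y) p - delta (fst q \<otimes> x) (snd q \<otimes> y) p
      - delta (fst q \<otimes> x') (snd q \<otimes> y) p) \<in> RL"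
    using q addl by (intro tens_rels.addl) auto
  ultimately show ?case by (simp add: mp_def)
next
  case (addr x y y')
  have "conv R (dl q) (\<lambda>p. dl (x, y \<oplus> y') p - dl (x, y) p - dl (x, y') p) =
     (\<lambda>p. dl (mp R q (x, y \<oplus> y')) p - dl (mp R q (x, y)) p - dl (mp R q (x, y')) p)"
    using conv_dl3[of "dl q" "(x, y \<oplus> y')" "(x, y)" "(x, y')"] by (simp add: spt_dl conv_delta)
  moreover have "mp R q (x, y \<oplus> y') = (fst q \<otimes> x, snd q \<otimes> y \<oplus> snd q \<otimes> y')"
    using q addr unfolding mp_def by (auto simp: r_distr)
  moreover have "(\<lambda>p. delta (fst q \<otimes> x) (snd q \<otimes> y \<oplus> snd q \<otimes> y') p - delta (fst q \<otimes> x) (snd q \<otimes> y) p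
      - delta (fst q \<otimes> x) (snd q \<otimes> y') p) \<in> RL"
    using q addr by (intro tens_rels.addr) auto
  ultimately show ?case by (simp add: mp_def)
next
  case (bal a x y)
  have ca: "a \<in> carrier R" using bal A_carr by auto
  have "conv R (dl q) (\<lambda>p. dl (a \<otimes> x, y) p - dl (x, a \<otimes> y) p) =
     (\<lambda>p. dl (mp R q (a \<otimes> x, y)) p - dl (mp R q (x, a \<otimes> y)) p)"
    using conv_dl2[of "dl q" "(a \<otimes> x, y)" "(x, a \<otimes> y)"] by (simp add: spt_dl conv_delta)
  moreover have "mp R q (a \<otimes> x, y) = (a \<otimes> (fst q \<otimes> x), snd q \<otimes> y)"
    "mp R q (x, a \<otimes> y) = (fst q \<otimes> x, a \<otimes> (snd q \<otimes> y))"
    using q bal ca unfolding mp_def by (auto simp: m_lcomm)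
  moreover have "(\<lambda>p. delta (a \<otimes> (fst q \<otimes> x)) (snd q \<otimes> y) p - delta (fst q \<otimes> x) (a \<otimes> (snd q \<otimes> y)) p) \<in> RL"
    using q bal by (intro tens_rels.bal) auto
  ultimately show ?case by simp
next
  case (diff f g)
  have "finite (spt f)" "finite (spt g)" using rels_fsums[OF diff(1)] rels_fsums[OF diff(2)]
    unfolding fsums_iff by auto
  then have "conv R (dl q) (\<lambda>p. f p + (-1) * g p) = (\<lambda>p. conv R (dl q) f p + (-1) * conv R (dl q) g p)"
    using conv_lin_r[of "dl q" f g R "-1"] by (simp add: spt_dl)
  then have "conv R (dl q) (\<lambda>p. f p - g p) = (\<lambda>p. conv R (dl q) f p - conv R (dl q) g p)"
    by simp
  then show ?case using diff tens_rels.diff by simp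
qed

lemma conv_rels:
  assumes f: "f \<in> fsums R" and g: "g \<in> RL"
  shows "conv R f g \<in> RL"
  using f
proof (induction rule: fsums_induct)
  case zero
  then show ?case by (simp add: conv_zero_l tens_rels.zero)
next
  case (step f q c)
  have "finite (spt f)" "finite (spt g)" using step rels_fsums[OF g] unfolding fsums_iff by auto
  then have "conv R (\<lambda>p. f p + c * dl q p) g = (\<lambda>p. conv R f g p + c * conv R (dl q) g p)"
    using conv_lin_l[of f "dl q" g R c] by (simp add: spt_dl)
  then show ?case using step conv_dl_rels[OF step(2) g] rels_lc by simp
qed

lemma rels_conv:
  assumes f: "f \<in> RL" and g: "g \<in> fsums R"
  shows "conv R f g \<in> RL"
  using conv_rels[OF g f] conv_comm[OF rels_fsums[OF f] g] by simp

abbreviation "cls \<equiv> tens_class R A"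

lemma cls_mem:
  assumes f: "f \<in> fsums R" shows "f \<in> cls f"
proof -
  have "(\<lambda>p. f p - f p) \<in> RL" by (rule rels_cong[OF tens_rels.zero]) simp
  then show ?thesis unfolding tens_class_def using f by simp
qed

lemma cls_iff: "f \<in> fsums R \<Longrightarrow> g \<in> fsums R \<Longrightarrow> cls f = cls g \<longleftrightarrow> (\<lambda>p. f p - g p) \<in> RL"
proof
  assume f: "f \<in> fsums R" and g: "g \<in> fsums R"
  {
    assume "cls f = cls g"
    then have "g \<in> cls f" using cls_mem[OF g] by simp
    then show "(\<lambda>p. f p - g p) \<in> RL" unfolding tens_class_def by simp
  }
  {
    assume fg: "(\<lambda>p. f p - g p) \<in> RL"
    have "h \<in> cls f \<longleftrightarrow> h \<in> cls g" for h
    proof -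
      have "(\<lambda>p. f p - h p) \<in> RL \<longleftrightarrow> (\<lambda>p. g p - h p) \<in> RL"
      proof
        assume "(\<lambda>p. f p - h p) \<in> RL"
        from rels_diff[OF this fg] show "(\<lambda>p. g p - h p) \<in> RL" by (rule rels_cong) simp
      next
        assume "(\<lambda>p. g p - h p) \<in> RL"
        from rels_add[OF this fg] show "(\<lambda>p. f p - h p) \<in> RL" by (rule rels_cong) simp
      qed
      then show ?thesis unfolding tens_class_def by simp
    qed
    then show "cls f = cls g" by blast
  }
qed

abbreviation "TT \<equiv> tensor R A"

lemma T_carrier: "carrier TT = cls ` fsums R" unfolding tensor_def by simp
lemma T_one: "\<one>\<^bsub>TT\<^esub> = cls (delta \<one> \<one>)" unfolding tensor_def by simp
lemma T_zero: "\<zero>\<^bsub>TT\<^esub> = cls (\<lambda>_. 0)" unfolding tensor_def by simp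

lemma T_add:
  assumes f: "f \<in> fsums R" and g: "g \<in> fsums R"
  shows "cls f \<oplus>\<^bsub>TT\<^esub> cls g = cls (\<lambda>p. f p + g p)"
proof -
  have "{h. \<exists>f'\<in>cls f. \<exists>g'\<in>cls g. h = (\<lambda>p. f' p + g' p)} = cls (\<lambda>p. f p + g p)"
  proof
    show "{h. \<exists>f'\<in>cls f. \<exists>g'\<in>cls g. h = (\<lambda>p. f' p + g' p)} \<subseteq> cls (\<lambda>p. f p + g p)"
    proof
      fix h assume "h \<in> {h. \<exists>f'\<in>cls f. \<exists>g'\<in>cls g. h = (\<lambda>p. f' p + g' p)}"
      then obtain f' g' where fg: "f' \<in> cls f" "g' \<in> cls g" "h = (\<lambda>p. f' p + g' p)" by auto
      have "f' \<in> fsums R" "g' \<in> fsums R" "(\<lambda>p. f p - f' p) \<in> RL" "(\<lambda>p. g p - g' p) \<in> RL"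
        using fg unfolding tens_class_def by auto
      then have "(\<lambda>p. f p + g p - h p) \<in> RL" "h \<in> fsums R"
        using rels_cong[OF rels_add, of "\<lambda>p. f p - f' p" "\<lambda>p. g p - g' p" "\<lambda>p. f p + g p - h p"]
          fsums_add[of f' R g'] fg(3) by auto
      then show "h \<in> cls (\<lambda>p. f p + g p)" unfolding tens_class_def by simp
    qed
    show "cls (\<lambda>p. f p + g p) \<subseteq> {h. \<exists>f'\<in>cls f. \<exists>g'\<in>cls g. h = (\<lambda>p. f' p + g' p)}"
    proof
      fix h assume h: "h \<in> cls (\<lambda>p. f p + g p)"
      then have hs: "h \<in> fsums R" "(\<lambda>p. f p + g p - h p) \<in> RL" unfolding tens_class_def by auto
      have "(\<lambda>p. f p - (h p - g p)) \<in> RL" using hs(2) by (rule rels_cong) simp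
      then have F: "(\<lambda>p. h p - g p) \<in> cls f" unfolding tens_class_def
        using fsums_diff[OF hs(1) g] by simp
      have G: "g \<in> cls g" using cls_mem g by auto
      have E: "\<exists>g'\<in>cls g. h = (\<lambda>p. (h p - g p) + g' p)" using G by (intro bexI[where x=g]) auto
      have "\<exists>f'\<in>cls f. \<exists>g'\<in>cls g. h = (\<lambda>p. f' p + g' p)"
      proof (rule bexI[where x="\<lambda>p. h p - g p"])
        show "\<exists>g'\<in>cls g. h = (\<lambda>p. (\<lambda>p. h p - g p) p + g' p)" using E by simp
      qed (rule F)
      then show "h \<in> {h. \<exists>f'\<in>cls f. \<exists>g'\<in>cls g. h = (\<lambda>p. f' p + g' p)}" by simp
    qed
  qed
  then show ?thesis unfolding tensor_def by simp
qed

lemma T_mult: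
  assumes f: "f \<in> fsums R" and g: "g \<in> fsums R"
  shows "cls f \<otimes>\<^bsub>TT\<^esub> cls g = cls (conv R f g)"
proof -
  have "{h \<in> fsums R. \<exists>f'\<in>cls f. \<exists>g'\<in>cls g. (\<lambda>p. h p - conv R f' g' p) \<in> RL} = cls (conv R f g)"
  proof
    show "{h \<in> fsums R. \<exists>f'\<in>cls f. \<exists>g'\<in>cls g. (\<lambda>p. h p - conv R f' g' p) \<in> RL} \<subseteq> cls (conv R f g)"
    proof
      fix h assume "h \<in> {h \<in> fsums R. \<exists>f'\<in>cls f. \<exists>g'\<in>cls g. (\<lambda>p. h p - conv R f' g' p) \<in> RL}"
      then obtain f' g' where fg: "h \<in> fsums R" "f' \<in> cls f" "g' \<in> cls g" "(\<lambda>p. h p - conv R f' g' p) \<in> RL"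
        by auto
      have s: "f' \<in> fsums R" "g' \<in> fsums R" and r: "(\<lambda>p. f p - f' p) \<in> RL" "(\<lambda>p. g p - g' p) \<in> RL"
        using fg unfolding tens_class_def by auto
      have fin: "finite (spt f)" "finite (spt f')" "finite (spt g)" "finite (spt g')"
        using s f g unfolding fsums_iff by auto
      have e1: "conv R (\<lambda>p. f p + (-1) * f' p) g = (\<lambda>p. conv R f g p + (-1) * conv R f' g p)"
        by (rule conv_lin_l[OF fin(1,2,3)])
      have e2: "conv R f' (\<lambda>p. g p + (-1) * g' p) = (\<lambda>p. conv R f' g p + (-1) * conv R f' g' p)"
        by (rule conv_lin_r[OF fin(2,3,4)])
      have r1: "conv R (\<lambda>p. f p + (-1) * f' p) g \<in> RL"
        using rels_conv[OF _ g] r(1) by (simp)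
      have r2: "conv R f' (\<lambda>p. g p + (-1) * g' p) \<in> RL"
        using conv_rels[OF s(1)] r(2) by simp
      have "(\<lambda>p. (\<lambda>p. conv R f g p + (-1) * conv R f' g p) p + (\<lambda>p. conv R f' g p + (-1) * conv R f' g' p) p
          - (\<lambda>p. h p - conv R f' g' p) p) \<in> RL"
        using rels_diff[OF rels_add[OF r1 r2] fg(4)] e1 e2 by simp
      then have "(\<lambda>p. conv R f g p - h p) \<in> RL" by (rule rels_cong) simp
      then show "h \<in> cls (conv R f g)" unfolding tens_class_def using fg(1) by simp
    qed
    show "cls (conv R f g) \<subseteq> {h \<in> fsums R. \<exists>f'\<in>cls f. \<exists>g'\<in>cls g. (\<lambda>p. h p - conv R f' g' p) \<in> RL}"
    proof
      fix h assume h: "h \<in> cls (conv R f g)"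
      then have hs: "h \<in> fsums R" "(\<lambda>p. conv R f g p - h p) \<in> RL" unfolding tens_class_def by auto
      have "(\<lambda>p. h p - conv R f g p) \<in> RL" using rels_neg[OF hs(2)] by (rule rels_cong) simp
      then have "\<exists>f'\<in>cls f. \<exists>g'\<in>cls g. (\<lambda>p. h p - conv R f' g' p) \<in> RL"
        using cls_mem[OF f] cls_mem[OF g] by blast
      then show "h \<in> {h \<in> fsums R. \<exists>f'\<in>cls f. \<exists>g'\<in>cls g. (\<lambda>p. h p - conv R f' g' p) \<in> RL}"
        using hs by simp
    qed
  qed
  then show ?thesis unfolding tensor_def by simp
qed

end


context tsetup
begin

lemma T_cls_carrier: "f \<in> fsums R \<Longrightarrow> cls f \<in> carrier TT"
  unfolding T_carrier by simp

lemma T_cases: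
  assumes "Z0 \<in> carrier TT"
  obtains f where "f \<in> fsums R" "Z0 = cls f"
  using assms unfolding T_carrier by auto

lemma T_cring: "cring TT"
proof (rule cringI)
  show "abelian_group TT"
  proof (rule abelian_groupI)
    fix x y assume "x \<in> carrier TT" "y \<in> carrier TT"
    then obtain f g where fg: "f \<in> fsums R" "x = cls f" "g \<in> fsums R" "y = cls g"
      by (metis T_cases)
    show "x \<oplus>\<^bsub>TT\<^esub> y \<in> carrier TT" using fg T_add T_cls_carrier[OF fsums_add[OF fg(1,3)]] by simp
    show "x \<oplus>\<^bsub>TT\<^esub> y = y \<oplus>\<^bsub>TT\<^esub> x" using fg T_add by (simp add: add.commute)
  next
    show "\<zero>\<^bsub>TT\<^esub> \<in> carrier TT" using T_zero T_cls_carrier[OF fsums_zero] by simp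
  next
    fix x y z assume "x \<in> carrier TT" "y \<in> carrier TT" "z \<in> carrier TT"
    then obtain f g h where fg: "f \<in> fsums R" "x = cls f" "g \<in> fsums R" "y = cls g" "h \<in> fsums R" "z = cls h"
      by (metis T_cases)
    show "x \<oplus>\<^bsub>TT\<^esub> y \<oplus>\<^bsub>TT\<^esub> z = x \<oplus>\<^bsub>TT\<^esub> (y \<oplus>\<^bsub>TT\<^esub> z)"
      using fg T_add fsums_add[OF fg(1,3)] fsums_add[OF fg(3,5)] by (simp add: add.assoc)
  next
    fix x assume "x \<in> carrier TT"
    then obtain f where f: "f \<in> fsums R" "x = cls f" by (metis T_cases)
    show "\<zero>\<^bsub>TT\<^esub> \<oplus>\<^bsub>TT\<^esub> x = x" using f T_add[OF fsums_zero f(1)] T_zero by simp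
    have "cls (\<lambda>p. - f p) \<oplus>\<^bsub>TT\<^esub> x = \<zero>\<^bsub>TT\<^esub>" using f T_add[OF fsums_neg[OF f(1)] f(1)] T_zero by simp
    then show "\<exists>y\<in>carrier TT. y \<oplus>\<^bsub>TT\<^esub> x = \<zero>\<^bsub>TT\<^esub>" using T_cls_carrier[OF fsums_neg[OF f(1)]] by blast
  qed
next
  show "comm_monoid TT"
  proof (rule comm_monoidI)
    fix x y assume "x \<in> carrier TT" "y \<in> carrier TT"
    then obtain f g where fg: "f \<in> fsums R" "x = cls f" "g \<in> fsums R" "y = cls g"
      by (metis T_cases)
    show "x \<otimes>\<^bsub>TT\<^esub> y \<in> carrier TT" using fg T_mult T_cls_carrier[OF fsums_conv[OF fg(1,3)]] by simp
    show "x \<otimes>\<^bsub>TT\<^esub> y = y \<otimes>\<^bsub>TT\<^esub> x" using fg T_mult conv_comm[OF fg(1,3)] by simp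
  next
    show "\<one>\<^bsub>TT\<^esub> \<in> carrier TT" using T_one T_cls_carrier[OF fsums_delta[OF one_closed one_closed]] by simp
  next
    fix x y z assume "x \<in> carrier TT" "y \<in> carrier TT" "z \<in> carrier TT"
    then obtain f g h where fg: "f \<in> fsums R" "x = cls f" "g \<in> fsums R" "y = cls g" "h \<in> fsums R" "z = cls h"
      by (metis T_cases)
    show "x \<otimes>\<^bsub>TT\<^esub> y \<otimes>\<^bsub>TT\<^esub> z = x \<otimes>\<^bsub>TT\<^esub> (y \<otimes>\<^bsub>TT\<^esub> z)"
      using fg T_mult fsums_conv[OF fg(1,3)] fsums_conv[OF fg(3,5)] conv_assoc[OF fg(1,3,5)] by simp
  next
    fix x assume "x \<in> carrier TT"
    then obtain f where f: "f \<in> fsums R" "x = cls f" by (metis T_cases)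
    show "\<one>\<^bsub>TT\<^esub> \<otimes>\<^bsub>TT\<^esub> x = x"
      using f T_mult[OF fsums_delta[OF one_closed one_closed] f(1)] T_one conv_one[OF f(1)] by simp
  qed
next
  fix x y z assume "x \<in> carrier TT" "y \<in> carrier TT" "z \<in> carrier TT"
  then obtain f g h where fg: "f \<in> fsums R" "x = cls f" "g \<in> fsums R" "y = cls g" "h \<in> fsums R" "z = cls h"
    by (metis T_cases)
  have fin: "finite (spt f)" "finite (spt g)" "finite (spt h)" using fg unfolding fsums_iff by auto
  have "conv R (\<lambda>p. f p + 1 * g p) h = (\<lambda>p. conv R f h p + 1 * conv R g h p)"
    by (rule conv_lin_l[OF fin])
  then have e: "conv R (\<lambda>p. f p + g p) h = (\<lambda>p. conv R f h p + conv R g h p)" by simp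
  show "(x \<oplus>\<^bsub>TT\<^esub> y) \<otimes>\<^bsub>TT\<^esub> z = x \<otimes>\<^bsub>TT\<^esub> z \<oplus>\<^bsub>TT\<^esub> y \<otimes>\<^bsub>TT\<^esub> z"
    using fg T_add T_mult fsums_add[OF fg(1,3)] fsums_conv[OF fg(1,5)] fsums_conv[OF fg(3,5)] e by simp
qed

lemma phi_hom: "tens_incl R A \<in> ring_hom R TT"
proof (rule ring_hom_memI)
  fix x assume "x \<in> carrier R"
  then show "tens_incl R A x \<in> carrier TT" unfolding tens_incl_def using fsums_delta T_cls_carrier by simp
next
  fix x y assume xy: "x \<in> carrier R" "y \<in> carrier R"
  have "tens_incl R A x \<otimes>\<^bsub>TT\<^esub> tens_incl R A y = cls (conv R (delta x \<one>) (delta y \<one>))"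
    unfolding tens_incl_def using T_mult fsums_delta xy by simp
  also have "\<dots> = cls (delta (x \<otimes> y) \<one>)" using conv_delta[of R x \<one> y \<one>] unfolding mp_def by simp
  finally show "tens_incl R A (x \<otimes> y) = tens_incl R A x \<otimes>\<^bsub>TT\<^esub> tens_incl R A y"
    unfolding tens_incl_def by simp
  have "tens_incl R A x \<oplus>\<^bsub>TT\<^esub> tens_incl R A y = cls (\<lambda>p. delta x \<one> p + delta y \<one> p)"
    unfolding tens_incl_def using T_add fsums_delta xy by simp
  also have "\<dots> = cls (delta (x \<oplus> y) \<one>)"
  proof -
    have "(\<lambda>p. delta (x \<oplus> y) \<one> p - delta x \<one> p - delta y \<one> p) \<in> RL"
      using xy by (intro tens_rels.addl) auto
    then have "(\<lambda>p. delta (x \<oplus> y) \<one> p - (\<lambda>p. delta x \<one> p + delta y \<one> p) p) \<in> RL"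
      by (rule rels_cong) simp
    then show ?thesis
      using cls_iff[of "delta (x \<oplus> y) \<one>" "\<lambda>p. delta x \<one> p + delta y \<one> p"]
        fsums_delta fsums_add[OF fsums_delta fsums_delta] xy by simp
  qed
  finally show "tens_incl R A (x \<oplus> y) = tens_incl R A x \<oplus>\<^bsub>TT\<^esub> tens_incl R A y"
    unfolding tens_incl_def by simp
next
  show "tens_incl R A \<one> = \<one>\<^bsub>TT\<^esub>" unfolding tens_incl_def T_one by simp
qed

end


context tsetup
begin

definition zc :: "int \<Rightarrow> 'a" where "zc c = add_pow R c \<one>"

lemma zc_closed[simp]: "zc c \<in> carrier R"
  unfolding zc_def by (simp add: add.int_pow_closed)

lemma zc_add: "zc (c + d) = zc c \<oplus> zc d"
  unfolding zc_def by (simp add: add.int_pow_mult)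

lemma zc_mult: "zc (c * d) = zc c \<otimes> zc d"
proof -
  have "zc c \<otimes> zc d = add_pow R d (zc c \<otimes> \<one>)"
    unfolding zc_def using add_pow_rdistr_int[of "add_pow R c \<one>" \<one> d] by (simp add: add.int_pow_closed)
  also have "\<dots> = add_pow R d (add_pow R c \<one>)" unfolding zc_def by (simp add: add.int_pow_closed)
  also have "\<dots> = add_pow R (c * d) \<one>" using add.int_pow_pow[of \<one> d c] by simp
  finally show ?thesis unfolding zc_def by simp
qed

lemma zc_0: "zc 0 = \<zero>"
proof -
  have "zc 0 = zc 0 \<oplus> zc 0" using zc_add[of 0 0] by simp
  then show ?thesis by (metis zc_closed r_zero add.l_cancel zero_closed)
qed

lemma zc_1: "zc 1 = \<one>"
  unfolding zc_def by (simp add: add.int_pow_1)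

lemma zc_m1: "zc (-1) = \<ominus> \<one>"
  unfolding zc_def by (simp add: add.int_pow_neg add.int_pow_1)

definition mu0 :: "('a \<times> 'a \<Rightarrow> int) \<Rightarrow> 'a" where
  "mu0 f = (\<Oplus>q\<in>spt f. zc (f q) \<otimes> (fst q \<otimes> snd q))"

lemma term_closed: "q \<in> carrier R \<times> carrier R \<Longrightarrow> zc c \<otimes> (fst q \<otimes> snd q) \<in> carrier R"
  by auto

lemma term_pi: "S \<subseteq> carrier R \<times> carrier R \<Longrightarrow> (\<lambda>q. zc (f q) \<otimes> (fst q \<otimes> snd q)) \<in> S \<rightarrow> carrier R"
  by (auto simp: subset_iff)

lemma mu0_alt:
  assumes f: "f \<in> fsums R" and S: "finite S" "spt f \<subseteq> S" "S \<subseteq> carrier R \<times> carrier R"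
  shows "mu0 f = (\<Oplus>q\<in>S. zc (f q) \<otimes> (fst q \<otimes> snd q))"
proof -
  have fs: "finite (spt f)" using f unfolding fsums_iff by auto
  have eq: "S = spt f \<union> (S - spt f)" using S by auto
  have "(\<Oplus>q\<in>S - spt f. zc (f q) \<otimes> (fst q \<otimes> snd q)) = (\<Oplus>q\<in>S - spt f. \<zero>)"
  proof (rule finsum_cong')
    show "(\<lambda>q. \<zero>) \<in> S - spt f \<rightarrow> carrier R" by auto
    fix q assume "q \<in> S - spt f"
    then have "f q = 0" "q \<in> carrier R \<times> carrier R" using S unfolding spt_def by auto
    then show "zc (f q) \<otimes> (fst q \<otimes> snd q) = \<zero>" by (auto simp: zc_0)
  qed simp
  then have z: "(\<Oplus>q\<in>S - spt f. zc (f q) \<otimes> (fst q \<otimes> snd q)) = \<zero>" by simp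
  have "(\<Oplus>q\<in>S. zc (f q) \<otimes> (fst q \<otimes> snd q)) =
      (\<Oplus>q\<in>spt f. zc (f q) \<otimes> (fst q \<otimes> snd q)) \<oplus> (\<Oplus>q\<in>S - spt f. zc (f q) \<otimes> (fst q \<otimes> snd q))"
    apply (subst eq)
    apply (rule finsum_Un_disjoint)
    using fs S term_pi[of "spt f" f] term_pi[of "S - spt f" f] by auto
  also have "\<dots> = mu0 f" unfolding mu0_def z
    using finsum_closed[OF term_pi[of "spt f" f]] S by auto
  finally show ?thesis by simp
qed

lemma mu0_closed: "f \<in> fsums R \<Longrightarrow> mu0 f \<in> carrier R"
  unfolding mu0_def fsums_iff by (intro finsum_closed term_pi) auto

lemma mu0_lc:
  assumes f: "f \<in> fsums R" and g: "g \<in> fsums R"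
  shows "mu0 (\<lambda>p. f p + c * g p) = mu0 f \<oplus> zc c \<otimes> mu0 g"
proof -
  let ?S = "spt f \<union> spt g"
  have S: "finite ?S" "?S \<subseteq> carrier R \<times> carrier R" using f g unfolding fsums_iff by auto
  have h: "(\<lambda>p. f p + c * g p) \<in> fsums R" using fsums_lc[OF f g] .
  have "mu0 (\<lambda>p. f p + c * g p) = (\<Oplus>q\<in>?S. zc (f q + c * g q) \<otimes> (fst q \<otimes> snd q))"
    by (rule mu0_alt[OF h S(1) spt_lc S(2)])
  also have "\<dots> = (\<Oplus>q\<in>?S. zc (f q) \<otimes> (fst q \<otimes> snd q) \<oplus> zc c \<otimes> (zc (g q) \<otimes> (fst q \<otimes> snd q)))"
  proof (rule finsum_cong')
    show "(\<lambda>q. zc (f q) \<otimes> (fst q \<otimes> snd q) \<oplus> zc c \<otimes> (zc (g q) \<otimes> (fst q \<otimes> snd q))) \<in> ?S \<rightarrow> carrier R"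
      using S(2) by (auto simp: subset_iff)
    fix q assume "q \<in> ?S"
    then have "fst q \<in> carrier R" "snd q \<in> carrier R" using S(2) by auto
    then show "zc (f q + c * g q) \<otimes> (fst q \<otimes> snd q) = zc (f q) \<otimes> (fst q \<otimes> snd q) \<oplus> zc c \<otimes> (zc (g q) \<otimes> (fst q \<otimes> snd q))"
      by (simp add: zc_add zc_mult l_distr m_assoc)
  qed simp
  also have "\<dots> = (\<Oplus>q\<in>?S. zc (f q) \<otimes> (fst q \<otimes> snd q)) \<oplus> (\<Oplus>q\<in>?S. zc c \<otimes> (zc (g q) \<otimes> (fst q \<otimes> snd q)))"
    by (rule finsum_addf) (use S(2) in \<open>auto simp: subset_iff\<close>)
  also have "(\<Oplus>q\<in>?S. zc c \<otimes> (zc (g q) \<otimes> (fst q \<otimes> snd q))) = zc c \<otimes> (\<Oplus>q\<in>?S. zc (g q) \<otimes> (fst q \<otimes> snd q))"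
    by (rule finsum_rdistr[symmetric]) (use S in \<open>auto simp: subset_iff\<close>)
  also have "(\<Oplus>q\<in>?S. zc (f q) \<otimes> (fst q \<otimes> snd q)) = mu0 f"
    by (rule mu0_alt[symmetric]) (use f S in auto)
  also have "(\<Oplus>q\<in>?S. zc (g q) \<otimes> (fst q \<otimes> snd q)) = mu0 g"
    by (rule mu0_alt[symmetric]) (use g S in auto)
  finally show ?thesis .
qed

lemma mu0_zero: "mu0 (\<lambda>_. 0) = \<zero>"
  unfolding mu0_def spt_zero by simp

lemma mu0_dl:
  assumes q: "q \<in> carrier R \<times> carrier R"
  shows "mu0 (dl q) = fst q \<otimes> snd q"
proof -
  have "mu0 (dl q) = zc (dl q q) \<otimes> (fst q \<otimes> snd q) \<oplus> (\<Oplus>q\<in>{}. zc (dl q q) \<otimes> (fst q \<otimes> snd q))"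
    unfolding mu0_def spt_dl using q by (subst finsum_insert) auto
  moreover have "fst q \<in> carrier R" "snd q \<in> carrier R" using q by auto
  ultimately show ?thesis by (simp add: dl_apply zc_1)
qed

lemma mu0_delta: "x \<in> carrier R \<Longrightarrow> y \<in> carrier R \<Longrightarrow> mu0 (delta x y) = x \<otimes> y"
  using mu0_dl[of "(x, y)"] by simp

lemma mu0_diff:
  assumes f: "f \<in> fsums R" and g: "g \<in> fsums R"
  shows "mu0 (\<lambda>p. f p - g p) = mu0 f \<ominus> mu0 g"
proof -
  have "mu0 (\<lambda>p. f p + (-1) * g p) = mu0 f \<oplus> zc (-1) \<otimes> mu0 g" by (rule mu0_lc[OF f g])
  then show ?thesis using mu0_closed[OF f] mu0_closed[OF g]
    by (simp add: zc_m1 minus_eq l_minus)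
qed

lemma mu0_conv_dl:
  assumes q: "q \<in> carrier R \<times> carrier R" and g: "g \<in> fsums R"
  shows "mu0 (conv R (dl q) g) = (fst q \<otimes> snd q) \<otimes> mu0 g"
  using g
proof (induction rule: fsums_induct)
  case zero
  have "fst q \<in> carrier R" "snd q \<in> carrier R" using q by auto
  then show ?case by (simp add: conv_zero_r mu0_zero)
next
  case (step g r c)
  have fin: "finite (spt g)" using step unfolding fsums_iff by auto
  have e: "conv R (dl q) (\<lambda>p. g p + c * dl r p) = (\<lambda>p. conv R (dl q) g p + c * dl (mp R q r) p)"
    using conv_lin_r[of "dl q" g "dl r" R c] fin by (simp add: spt_dl conv_dl)
  have m: "mp R q r \<in> carrier R \<times> carrier R" using mp_carrier q step by auto
  have "mu0 (conv R (dl q) (\<lambda>p. g p + c * dl r p)) = mu0 (conv R (dl q) g) \<oplus> zc c \<otimes> mu0 (dl (mp R q r))"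
    unfolding e by (rule mu0_lc[OF fsums_conv[OF fsums_dl[OF q] step(1)] fsums_dl[OF m]])
  also have "\<dots> = (fst q \<otimes> snd q) \<otimes> mu0 g \<oplus> zc c \<otimes> ((fst q \<otimes> fst r) \<otimes> (snd q \<otimes> snd r))"
    using step mu0_dl[OF m] unfolding mp_def by simp
  also have "\<dots> = (fst q \<otimes> snd q) \<otimes> (mu0 g \<oplus> zc c \<otimes> (fst r \<otimes> snd r))"
  proof -
    have c: "fst q \<in> carrier R" "snd q \<in> carrier R" "fst r \<in> carrier R" "snd r \<in> carrier R"
      "mu0 g \<in> carrier R" "zc c \<in> carrier R"
      using q step mu0_closed by auto
    show ?thesis using c by algebra
  qed
  also have "\<dots> = (fst q \<otimes> snd q) \<otimes> mu0 (\<lambda>p. g p + c * dl r p)"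
    using mu0_lc[OF step(1) fsums_dl[OF step(2)]] mu0_dl[OF step(2)] by simp
  finally show ?case .
qed

lemma mu0_conv:
  assumes f: "f \<in> fsums R" and g: "g \<in> fsums R"
  shows "mu0 (conv R f g) = mu0 f \<otimes> mu0 g"
  using f
proof (induction rule: fsums_induct)
  case zero
  then show ?case using mu0_closed[OF g] by (simp add: conv_zero_l mu0_zero)
next
  case (step f q c)
  have fin: "finite (spt f)" "finite (spt g)" using step g unfolding fsums_iff by auto
  have e: "conv R (\<lambda>p. f p + c * dl q p) g = (\<lambda>p. conv R f g p + c * conv R (dl q) g p)"
    using conv_lin_l[of f "dl q" g R c] fin by (simp add: spt_dl)
  have "mu0 (conv R (\<lambda>p. f p + c * dl q p) g) = mu0 (conv R f g) \<oplus> zc c \<otimes> mu0 (conv R (dl q) g)"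
    unfolding e by (rule mu0_lc[OF fsums_conv[OF step(1) g] fsums_conv[OF fsums_dl[OF step(2)] g]])
  also have "\<dots> = mu0 f \<otimes> mu0 g \<oplus> zc c \<otimes> ((fst q \<otimes> snd q) \<otimes> mu0 g)"
    using step mu0_conv_dl[OF step(2) g] by simp
  also have "\<dots> = (mu0 f \<oplus> zc c \<otimes> (fst q \<otimes> snd q)) \<otimes> mu0 g"
  proof -
    have c: "fst q \<in> carrier R" "snd q \<in> carrier R" "mu0 f \<in> carrier R"
      "mu0 g \<in> carrier R" "zc c \<in> carrier R"
      using step mu0_closed g by auto
    show ?thesis using c by algebra
  qed
  also have "\<dots> = mu0 (\<lambda>p. f p + c * dl q p) \<otimes> mu0 g"
    using mu0_lc[OF step(1) fsums_dl[OF step(2)]] mu0_dl[OF step(2)] by simp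
  finally show ?case .
qed

lemma mu0_rels: "f \<in> RL \<Longrightarrow> mu0 f = \<zero>"
proof (induction rule: tens_rels.induct)
  case zero
  show ?case using mu0_zero by simp
next
  case (addl x x' y)
  have d: "delta (x \<oplus> x') y \<in> fsums R" "delta x y \<in> fsums R" "delta x' y \<in> fsums R"
    using addl by (auto intro!: fsums_delta)
  have e1: "mu0 (\<lambda>p. delta (x \<oplus> x') y p - delta x y p - delta x' y p) =
      mu0 (\<lambda>p. delta (x \<oplus> x') y p - delta x y p) \<ominus> mu0 (delta x' y)"
    using mu0_diff[OF fsums_diff[OF d(1,2)] d(3)] by simp
  have e2: "mu0 (\<lambda>p. delta (x \<oplus> x') y p - delta x y p) = mu0 (delta (x \<oplus> x') y) \<ominus> mu0 (delta x y)"
    by (rule mu0_diff[OF d(1,2)])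
  have e3: "(x \<oplus> x') \<otimes> y \<ominus> x \<otimes> y \<ominus> x' \<otimes> y = \<zero>" using addl by algebra
  show ?case using e1 e2 e3 mu0_delta addl by simp
next
  case (addr x y y')
  have d: "delta x (y \<oplus> y') \<in> fsums R" "delta x y \<in> fsums R" "delta x y' \<in> fsums R"
    using addr by (auto intro!: fsums_delta)
  have e1: "mu0 (\<lambda>p. delta x (y \<oplus> y') p - delta x y p - delta x y' p) =
      mu0 (\<lambda>p. delta x (y \<oplus> y') p - delta x y p) \<ominus> mu0 (delta x y')"
    using mu0_diff[OF fsums_diff[OF d(1,2)] d(3)] by simp
  have e2: "mu0 (\<lambda>p. delta x (y \<oplus> y') p - delta x y p) = mu0 (delta x (y \<oplus> y')) \<ominus> mu0 (delta x y)"
    by (rule mu0_diff[OF d(1,2)])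
  have e3: "x \<otimes> (y \<oplus> y') \<ominus> x \<otimes> y \<ominus> x \<otimes> y' = \<zero>" using addr by algebra
  show ?case using e1 e2 e3 mu0_delta addr by simp
next
  case (bal a x y)
  have ca: "a \<in> carrier R" using bal A_carr by auto
  have d: "delta (a \<otimes> x) y \<in> fsums R" "delta x (a \<otimes> y) \<in> fsums R"
    using bal ca by (auto intro!: fsums_delta)
  have e1: "mu0 (\<lambda>p. delta (a \<otimes> x) y p - delta x (a \<otimes> y) p) = mu0 (delta (a \<otimes> x) y) \<ominus> mu0 (delta x (a \<otimes> y))"
    by (rule mu0_diff[OF d])
  have e3: "(a \<otimes> x) \<otimes> y \<ominus> x \<otimes> (a \<otimes> y) = \<zero>" using bal ca by algebra
  show ?case using e1 e3 mu0_delta bal ca by simp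
next
  case (diff f g)
  then show ?case using mu0_diff[OF rels_fsums[OF diff(1)] rels_fsums[OF diff(2)]] by simp
qed

definition mu :: "('a \<times> 'a \<Rightarrow> int) set \<Rightarrow> 'a" where
  "mu Z0 = mu0 (SOME f. f \<in> Z0)"

lemma mu_cls:
  assumes f: "f \<in> fsums R"
  shows "mu (cls f) = mu0 f"
proof -
  have "\<exists>g. g \<in> cls f" using cls_mem[OF f] by blast
  then have g: "(SOME g. g \<in> cls f) \<in> cls f" by (rule someI_ex)
  define g where "g = (SOME g. g \<in> cls f)"
  have gs: "g \<in> fsums R" "(\<lambda>p. f p - g p) \<in> RL" using g unfolding g_def tens_class_def by auto
  have "mu0 f \<ominus> mu0 g = \<zero>" using mu0_rels[OF gs(2)] mu0_diff[OF f gs(1)] by simp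
  moreover have "mu0 f = (mu0 f \<ominus> mu0 g) \<oplus> mu0 g"
    using mu0_closed[OF f] mu0_closed[OF gs(1)] by algebra
  ultimately have "mu0 g = mu0 f" using mu0_closed[OF gs(1)] by simp
  then show ?thesis unfolding mu_def g_def by simp
qed

lemma mu_hom: "mu \<in> ring_hom TT R"
proof (rule ring_hom_memI)
  fix x assume "x \<in> carrier TT"
  then obtain f where f: "f \<in> fsums R" "x = cls f" by (metis T_cases)
  then show "mu x \<in> carrier R" using mu_cls mu0_closed by simp
next
  fix x y assume "x \<in> carrier TT" "y \<in> carrier TT"
  then obtain f g where fg: "f \<in> fsums R" "x = cls f" "g \<in> fsums R" "y = cls g"
    by (metis T_cases)
  show "mu (x \<otimes>\<^bsub>TT\<^esub> y) = mu x \<otimes> mu y"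
    using fg T_mult mu_cls fsums_conv[OF fg(1,3)] mu0_conv[OF fg(1,3)] by simp
  have "mu0 (\<lambda>p. f p + 1 * g p) = mu0 f \<oplus> zc 1 \<otimes> mu0 g" by (rule mu0_lc[OF fg(1,3)])
  then have "mu0 (\<lambda>p. f p + g p) = mu0 f \<oplus> mu0 g" using mu0_closed[OF fg(3)] by (simp add: zc_1)
  then show "mu (x \<oplus>\<^bsub>TT\<^esub> y) = mu x \<oplus> mu y"
    using fg T_add mu_cls fsums_add[OF fg(1,3)] by simp
next
  show "mu \<one>\<^bsub>TT\<^esub> = \<one>"
    using T_one mu_cls[OF fsums_delta[OF one_closed one_closed]] mu0_delta by simp
qed

lemma mu_retr: "b \<in> carrier R \<Longrightarrow> mu (tens_incl R A b) = b"
  unfolding tens_incl_def using mu_cls[OF fsums_delta[OF _ one_closed]] mu0_delta by simp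

theorem main_iso:
  "Cmap R TT (tens_incl R A) A \<in> iso (Cgrp R A) (Cgrp TT (tens_incl R A ` A))"
proof (rule Cmap_iso_general)
  show "cring R" by (rule is_cring)
  show "cring TT" by (rule T_cring)
  show "tens_incl R A \<in> ring_hom R TT" by (rule phi_hom)
  show "mu \<in> ring_hom TT R" by (rule mu_hom)
  show "\<And>b. b \<in> carrier R \<Longrightarrow> mu (tens_incl R A b) = b" by (rule mu_retr)
  show "A \<subseteq> carrier R" by (rule A_carr)
  show "\<one> \<in> A" using subA subringE(3) by blast
qed

end

theorem corollary5p14:
  fixes B :: "('b,'m) ring_scheme" and A :: "'b set"
  assumes "cring B" and "subring A B"
  shows "Cmap B (tensor B A) (tens_incl B A) A
           \<in> iso (Cgrp B A) (Cgrp (tensor B A) (tens_incl B A ` A))"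
proof -
  interpret tsetup B A
    by (rule tsetup.intro[OF assms(1)]) (rule tsetup_axioms.intro[OF assms(2)])
  show ?thesis by (rule main_iso)
qed


end
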